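(* Let $R\in\{0,1\}$ be a source indicator ($R=0$ primary, $R=1$ auxiliary), $X\in\{0,1\}$ a treatment, $Y$ an outcome, $V$ observed covariates, $U$ unmeasured variables, and $Z\in\{0,1\}$ an instrument observed only when $R=1$; potential outcomes $Y_x$ satisfy $Y=XY_1+(1-X)Y_0$. Assume (A1) $Y_x\perp\!\!\!\perp X\mid V,U,R$; (A2) $Z\perp\!\!\!\perp U\mid V,R=1$, $Z\perp\!\!\!\perp Y\mid X,V,U,R=1$, and $Z$ and $X$ are dependent given $V,R=1$; and the relaxed outcome model $$E(Y\mid X,V,U,R)=\zeta_0(V,U)+\zeta(V,U)R+\beta(V,R)X$$ for unknown scalar functions $\zeta_0,\zeta,\beta$. Then, given the sensitivity function $\xi(V)$, $\beta_0(V)=\beta(V,0)$ is identified by $$\beta_0(V)=E\Big\{\frac{\beta_1(V)\sigma_1^2(V)-\xi(V)}{\sigma_0^2(V)}-\frac{(2R-1)\eta Y}{f(R\mid V)\sigma_0^2(V)}\;\Big|\;V\Big\},$$ where $\beta_1(V)=\dfrac{E(Y\mid Z=1,V,R=1)-E(Y\mid Z=0,V,R=1)}{E(X\mid Z=1,V,R=1)-E(X\mid Z=0,V,R=1)}$, and $\tau=E(Y_1-Y_0\mid R=0)$ is identified by $$\tau=E\Big[\frac{(1-R)\{\beta_1(V)\sigma_1^2(V)-\xi(V)\}}{q\,\sigma_0^2(V)}-\Big\{\frac{R}{f(R\mid V)}-1\Big\}\frac{\eta Y}{q\,\sigma_0^2(V)}\Big].$$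
   Context: For $r=0,1$: $\varepsilon_r(V,U)=E(X\mid V,U,R=r)$ and $\zeta_r(V,U)=E(Y\mid V,U,R=r,X=0)$. The sensitivity parameter is $\xi(V)=\mathrm{Cov}\{\varepsilon_0(V,U),\zeta_0(V,U)\mid V,R=0\}-\mathrm{Cov}\{\varepsilon_1(V,U),\zeta_1(V,U)\mid V,R=1\}$. Notation: $\omega(V)=P(R=1\mid V)$, $f(R\mid V)=R\omega(V)+(1-R)\{1-\omega(V)\}$; $\mu(V,R)=E(X\mid V,R)$, $\mu_r=\mu(\cdot,r)$; $\eta=X-\mu(V,R)$; $\sigma_r^2(V)=\mu_r(V)\{1-\mu_r(V)\}$; $q=P(R=0)$; $\beta_r(V)=\beta(V,r)$. *)

theory Defs
  imports "HOL-Probability.Probability"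
begin

definition gen :: "'a measure \<Rightarrow> 'b measure \<Rightarrow> ('a \<Rightarrow> 'b) \<Rightarrow> 'a measure" where
  "gen M N W = vimage_algebra (space M) W N"

definition cexp :: "'a measure \<Rightarrow> 'b measure \<Rightarrow> ('a \<Rightarrow> 'b) \<Rightarrow> ('a \<Rightarrow> real) \<Rightarrow> 'a \<Rightarrow> real" where
  "cexp M N W f = real_cond_exp M (gen M N W) f"

text \<open>Conditional independence of A and B given C, holding on the event P
  (P is meant to be determined by C, e.g. R = 1 with R a component of C):
  P(A in S, B in T | C) = P(A in S | C) P(B in T | C) almost surely on P.\<close>
definition cond_indep_on ::
  "'a measure \<Rightarrow> ('a \<Rightarrow> bool) \<Rightarrow> 'b measure \<Rightarrow> ('a \<Rightarrow> 'b) \<Rightarrow> 'c measure \<Rightarrow> ('a \<Rightarrow> 'c)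
     \<Rightarrow> 'd measure \<Rightarrow> ('a \<Rightarrow> 'd) \<Rightarrow> bool" where
  "cond_indep_on M P MA A MB B MC C \<longleftrightarrow>
     (\<forall>S\<in>sets MA. \<forall>T\<in>sets MB. AE \<omega> in M. P \<omega> \<longrightarrow>
        cexp M MC C (indicator {x\<in>space M. A x \<in> S \<and> B x \<in> T}) \<omega> =
        cexp M MC C (indicator {x\<in>space M. A x \<in> S}) \<omega> *
        cexp M MC C (indicator {x\<in>space M. B x \<in> T}) \<omega>)"

text \<open>Wald ratio beta_1(v) from versions gY z v = E(Y|Z=z,V=v,R=1), gX z v = E(X|Z=z,V=v,R=1).\<close>
definition wald :: "(real \<Rightarrow> 'v \<Rightarrow> real) \<Rightarrow> (real \<Rightarrow> 'v \<Rightarrow> real) \<Rightarrow> 'v \<Rightarrow> real" where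
  "wald gY gX v = (gY 1 v - gY 0 v) / (gX 1 v - gX 0 v)"

definition sig2 :: "('v \<Rightarrow> real \<Rightarrow> real) \<Rightarrow> 'v \<Rightarrow> real \<Rightarrow> real" where
  "sig2 mu v r = mu v r * (1 - mu v r)"

definition fRV :: "('v \<Rightarrow> real) \<Rightarrow> real \<Rightarrow> 'v \<Rightarrow> real" where
  "fRV om r v = r * om v + (1 - r) * (1 - om v)"

end

theory Submission
  imports Defs
begin
lemma gen_sfs:
  assumes P: "prob_space M" and W: "W \<in> M \<rightarrow>\<^sub>M N"
  shows "sigma_finite_subalgebra M (gen M N W)"
proof -
  interpret prob_space M by fact
  have "subalgebra M (gen M N W)"
    unfolding subalgebra_def gen_def
    using sets_image_in_sets[OF refl W] by auto
  then have "finite_measure_subalgebra M (gen M N W)"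
    by (simp add: finite_measure_subalgebra_axioms_def finite_measure_subalgebra_def finite_measure_axioms)
  then show ?thesis by (rule finite_measure_subalgebra_is_sigma_finite)
qed

lemma gen_meas:
  assumes W: "W \<in> M \<rightarrow>\<^sub>M N" and g: "g \<in> N \<rightarrow>\<^sub>M L"
  shows "(\<lambda>\<omega>. g (W \<omega>)) \<in> gen M N W \<rightarrow>\<^sub>M L"
  unfolding gen_def
  by (rule measurable_compose[OF measurable_vimage_algebra1 g]) (auto intro: measurable_space[OF W])

lemma gen_set:
  assumes W: "W \<in> M \<rightarrow>\<^sub>M N" and B: "B \<in> sets N"
  shows "{\<omega>\<in>space M. W \<omega> \<in> B} \<in> sets (gen M N W)"
proof -
  have "W -` B \<inter> space M \<in> sets (gen M N W)" unfolding gen_def by (rule in_vimage_algebra[OF B])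
  moreover have "W -` B \<inter> space M = {\<omega>\<in>space M. W \<omega> \<in> B}" by auto
  ultimately show ?thesis by simp
qed

lemma gen_sub:
  assumes W2: "W2 \<in> M \<rightarrow>\<^sub>M N2" and phi: "\<phi> \<in> N2 \<rightarrow>\<^sub>M N1"
    and eq: "\<And>\<omega>. \<omega> \<in> space M \<Longrightarrow> W1 \<omega> = \<phi> (W2 \<omega>)"
  shows "subalgebra (gen M N2 W2) (gen M N1 W1)"
proof -
  have "(\<lambda>\<omega>. \<phi> (W2 \<omega>)) \<in> gen M N2 W2 \<rightarrow>\<^sub>M N1" by (rule gen_meas[OF W2 phi])
  then have m: "W1 \<in> gen M N2 W2 \<rightarrow>\<^sub>M N1"
    by (rule measurable_cong[THEN iffD1, rotated]) (simp add: eq gen_def)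
  show ?thesis unfolding subalgebra_def
    using sets_image_in_sets[of "gen M N2 W2" "space M" W1 N1] m by (auto simp: gen_def)
qed

lemma CI_core:
  fixes \<phi> :: "'d \<times> 'c \<Rightarrow> real"
  assumes P: "prob_space M"
    and ci: "cond_indep_on M Q MA A MB B MC C"
    and mA[measurable]: "A \<in> M \<rightarrow>\<^sub>M MA" and mB[measurable]: "B \<in> M \<rightarrow>\<^sub>M MB"
    and mC[measurable]: "C \<in> M \<rightarrow>\<^sub>M MC"
    and S[measurable]: "S \<in> sets MA"
    and A0: "A0 \<in> sets (gen M MC C)" and A0Q: "\<And>\<omega>. \<omega> \<in> A0 \<Longrightarrow> Q \<omega>"
    and phi[measurable]: "\<phi> \<in> MC \<Otimes>\<^sub>M MB \<rightarrow>\<^sub>M borel"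
  shows "(\<integral>\<omega>. indicator A0 \<omega> * indicator {x\<in>space M. A x \<in> S} \<omega> * \<phi> (C \<omega>, B \<omega>) \<partial>M) =
         (\<integral>\<omega>. indicator A0 \<omega> * cexp M MC C (indicator {x\<in>space M. A x \<in> S}) \<omega> * \<phi> (C \<omega>, B \<omega>) \<partial>M)"
proof -
  interpret prob_space M by fact
  let ?F = "gen M MC C"
  interpret F: sigma_finite_subalgebra M ?F by (rule gen_sfs[OF P mC])
  have subF: "sets ?F \<subseteq> sets M" using F.subalg by (simp add: subalgebra_def)
  have A0M[measurable]: "A0 \<in> sets M" using A0 subF by auto
  define p where "p = cexp M MC C (indicator {x\<in>space M. A x \<in> S})"
  have pF: "p \<in> borel_measurable ?F" unfolding p_def cexp_def by simp
  have pM[measurable]: "p \<in> borel_measurable M" unfolding p_def cexp_def by simp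
  have intS: "integrable M (indicator {x\<in>space M. A x \<in> S} :: _ \<Rightarrow> real)"
    by (rule integrable_real_indicator) (auto simp: less_top[symmetric])
  have p0: "AE \<omega> in M. 0 \<le> p \<omega>" unfolding p_def cexp_def
    by (rule F.real_cond_exp_ge_c[OF intS]) auto
  have p1: "AE \<omega> in M. p \<omega> \<le> 1" unfolding p_def cexp_def
    by (rule F.real_cond_exp_le_c[OF intS]) auto
  have intp: "integrable M p" unfolding p_def cexp_def by (rule F.real_cond_exp_int(1)[OF intS])
  define g1 where "g1 \<omega> = indicator A0 \<omega> * (indicator {x\<in>space M. A x \<in> S} \<omega> :: real)" for \<omega>
  define g2 where "g2 \<omega> = indicator A0 \<omega> * p \<omega>" for \<omega>
  have [measurable]: "g1 \<in> borel_measurable M" "g2 \<in> borel_measurable M" unfolding g1_def g2_def by auto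
  have g1pos: "AE \<omega> in M. 0 \<le> g1 \<omega>" by (auto simp: g1_def)
  have g2pos: "AE \<omega> in M. 0 \<le> g2 \<omega>" using p0 by (auto simp: g2_def)
  define N1 where "N1 = distr (density M (\<lambda>\<omega>. ennreal (g1 \<omega>))) (MC \<Otimes>\<^sub>M MB) (\<lambda>\<omega>. (C \<omega>, B \<omega>))"
  define N2 where "N2 = distr (density M (\<lambda>\<omega>. ennreal (g2 \<omega>))) (MC \<Otimes>\<^sub>M MB) (\<lambda>\<omega>. (C \<omega>, B \<omega>))"
  have em: "emeasure (distr (density M (\<lambda>\<omega>. ennreal (g \<omega>))) (MC \<Otimes>\<^sub>M MB) (\<lambda>\<omega>. (C \<omega>, B \<omega>))) (a \<times> b)
      = ennreal (\<integral>\<omega>. g \<omega> * indicator {x\<in>space M. C x \<in> a \<and> B x \<in> b} \<omega> \<partial>M)"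
    if [measurable]: "g \<in> borel_measurable M" "a \<in> sets MC" "b \<in> sets MB"
       and gp: "AE \<omega> in M. 0 \<le> g \<omega>" and gi: "integrable M g" for g a b
  proof -
    have "emeasure (distr (density M (\<lambda>\<omega>. ennreal (g \<omega>))) (MC \<Otimes>\<^sub>M MB) (\<lambda>\<omega>. (C \<omega>, B \<omega>))) (a \<times> b)
       = emeasure (density M (\<lambda>\<omega>. ennreal (g \<omega>))) ((\<lambda>\<omega>. (C \<omega>, B \<omega>)) -` (a \<times> b) \<inter> space M)"
      by (subst emeasure_distr) auto
    also have "(\<lambda>\<omega>. (C \<omega>, B \<omega>)) -` (a \<times> b) \<inter> space M = {x\<in>space M. C x \<in> a \<and> B x \<in> b}" by auto
    also have "emeasure (density M (\<lambda>\<omega>. ennreal (g \<omega>))) {x\<in>space M. C x \<in> a \<and> B x \<in> b}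
        = (\<integral>\<^sup>+ \<omega>. ennreal (g \<omega>) * indicator {x\<in>space M. C x \<in> a \<and> B x \<in> b} \<omega> \<partial>M)"
      by (rule emeasure_density) auto
    also have "\<dots> = (\<integral>\<^sup>+ \<omega>. ennreal (g \<omega> * indicator {x\<in>space M. C x \<in> a \<and> B x \<in> b} \<omega>) \<partial>M)"
      by (rule nn_integral_cong) (auto simp: indicator_def)
    also have "\<dots> = ennreal (\<integral>\<omega>. g \<omega> * indicator {x\<in>space M. C x \<in> a \<and> B x \<in> b} \<omega> \<partial>M)"
    proof (rule nn_integral_eq_integral)
      show "integrable M (\<lambda>\<omega>. g \<omega> * indicator {x\<in>space M. C x \<in> a \<and> B x \<in> b} \<omega>)"
        by (rule integrable_real_mult_indicator[OF _ gi]) simp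
      show "AE \<omega> in M. 0 \<le> g \<omega> * indicator {x\<in>space M. C x \<in> a \<and> B x \<in> b} \<omega>"
        using gp by eventually_elim (auto simp: indicator_def)
    qed
    finally show ?thesis .
  qed
  have rect: "emeasure N1 (a \<times> b) = emeasure N2 (a \<times> b)" if [measurable]: "a \<in> sets MC" "b \<in> sets MB" for a b
  proof -
    define A1 where "A1 = A0 \<inter> {\<omega>\<in>space M. C \<omega> \<in> a}"
    have A1F: "A1 \<in> sets ?F" unfolding A1_def by (rule sets.Int[OF A0 gen_set[OF mC]]) simp
    have [measurable]: "A1 \<in> sets M" using A1F subF by auto
    have A1Q: "Q \<omega>" if "\<omega> \<in> A1" for \<omega> using that A0Q by (auto simp: A1_def)
    have A0sp: "A0 \<subseteq> space M" using sets.sets_into_space[OF A0M] .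
    define q where "q = cexp M MC C (indicator {x\<in>space M. B x \<in> b})"
    have [measurable]: "q \<in> borel_measurable M" unfolding q_def cexp_def by simp
    define J where "J = (indicator {x\<in>space M. A x \<in> S \<and> B x \<in> b} :: 'a \<Rightarrow> real)"
    have [measurable]: "J \<in> borel_measurable M" unfolding J_def by simp
    have intJ: "integrable M J" unfolding J_def
      by (rule integrable_real_indicator) (auto simp: less_top[symmetric])
    have ind1: "(\<integral>\<omega>. g1 \<omega> * indicator {x\<in>space M. C x \<in> a \<and> B x \<in> b} \<omega> \<partial>M)
        = (\<integral>\<omega>. indicator A1 \<omega> * J \<omega> \<partial>M)"
      by (rule Bochner_Integration.integral_cong) (auto simp: g1_def J_def A1_def indicator_def)
    also have "\<dots> = (\<integral>\<omega>. indicator A1 \<omega> * real_cond_exp M ?F J \<omega> \<partial>M)"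
      by (rule F.real_cond_exp_intg(2)[symmetric])
        (auto intro!: integrable_mult_indicator[of A1 M J, simplified] intJ
          borel_measurable_indicator A1F)
    also have "\<dots> = (\<integral>\<omega>. indicator A1 \<omega> * p \<omega> * q \<omega> \<partial>M)"
    proof (rule integral_cong_AE)
      have "AE \<omega> in M. Q \<omega> \<longrightarrow> real_cond_exp M ?F J \<omega> = p \<omega> * q \<omega>"
        using ci S \<open>b \<in> sets MB\<close> unfolding cond_indep_on_def p_def q_def J_def cexp_def by blast
      then show "AE \<omega> in M. indicator A1 \<omega> * real_cond_exp M ?F J \<omega> = indicator A1 \<omega> * p \<omega> * q \<omega>"
        by eventually_elim (auto simp: indicator_def A1Q)
    qed auto
    also have "\<dots> = (\<integral>\<omega>. (indicator A1 \<omega> * p \<omega>) * indicator {x\<in>space M. B x \<in> b} \<omega> \<partial>M)"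
      unfolding q_def cexp_def
    proof (rule F.real_cond_exp_intg(2))
      show "integrable M (\<lambda>\<omega>. indicator A1 \<omega> * p \<omega> * indicator {x\<in>space M. B x \<in> b} \<omega>)"
        by (rule Bochner_Integration.integrable_bound[OF intp]) (auto simp: indicator_def)
      show "(\<lambda>\<omega>. indicator A1 \<omega> * p \<omega>) \<in> borel_measurable ?F"
        using pF A1F by measurable
    qed auto
    also have "\<dots> = (\<integral>\<omega>. g2 \<omega> * indicator {x\<in>space M. C x \<in> a \<and> B x \<in> b} \<omega> \<partial>M)"
      by (rule Bochner_Integration.integral_cong) (auto simp: g2_def A1_def indicator_def)
    finally have eq: "(\<integral>\<omega>. g1 \<omega> * indicator {x\<in>space M. C x \<in> a \<and> B x \<in> b} \<omega> \<partial>M)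
       = (\<integral>\<omega>. g2 \<omega> * indicator {x\<in>space M. C x \<in> a \<and> B x \<in> b} \<omega> \<partial>M)" .
    have ig1: "integrable M g1" unfolding g1_def
      by (rule Bochner_Integration.integrable_bound[OF intS]) (auto simp: indicator_def)
    have ig2: "integrable M g2" unfolding g2_def
      by (rule Bochner_Integration.integrable_bound[OF intp]) (auto simp: indicator_def)
    have e1: "emeasure N1 (a \<times> b) = ennreal (\<integral>\<omega>. g1 \<omega> * indicator {x\<in>space M. C x \<in> a \<and> B x \<in> b} \<omega> \<partial>M)"
      unfolding N1_def by (rule em) (auto simp: g1pos ig1 that)
    have e2: "emeasure N2 (a \<times> b) = ennreal (\<integral>\<omega>. g2 \<omega> * indicator {x\<in>space M. C x \<in> a \<and> B x \<in> b} \<omega> \<partial>M)"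
      unfolding N2_def by (rule em) (auto simp: g2pos ig2 that)
    show ?thesis using e1 e2 eq by simp
  qed
  have "N1 = N2"
  proof (rule measure_eqI_generator_eq[OF Int_stable_pair_measure_generator[of MC MB]])
    show "{a \<times> b |a b. a \<in> sets MC \<and> b \<in> sets MB} \<subseteq> Pow (space MC \<times> space MB)"
    proof
      fix X assume "X \<in> {a \<times> b |a b. a \<in> sets MC \<and> b \<in> sets MB}"
      then obtain a b where "X = a \<times> b" "a \<in> sets MC" "b \<in> sets MB" by blast
      then show "X \<in> Pow (space MC \<times> space MB)"
        using sets.sets_into_space[of a MC] sets.sets_into_space[of b MB] by auto
    qed
    show "\<And>X. X \<in> {a \<times> b |a b. a \<in> sets MC \<and> b \<in> sets MB} \<Longrightarrow> emeasure N1 X = emeasure N2 X"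
      using rect by auto
    show "sets N1 = sigma_sets (space MC \<times> space MB) {a \<times> b |a b. a \<in> sets MC \<and> b \<in> sets MB}"
      unfolding N1_def sets_distr by (rule sets_pair_measure)
    show "sets N2 = sigma_sets (space MC \<times> space MB) {a \<times> b |a b. a \<in> sets MC \<and> b \<in> sets MB}"
      unfolding N2_def sets_distr by (rule sets_pair_measure)
    show "range (\<lambda>i. space MC \<times> space MB) \<subseteq> {a \<times> b |a b. a \<in> sets MC \<and> b \<in> sets MB}" by auto
    show "(\<Union>i. space MC \<times> space MB) = space MC \<times> space MB" by simp
    show "emeasure N1 (space MC \<times> space MB) \<noteq> \<infinity>" for i :: nat
    proof -
      have ig1: "integrable M g1" unfolding g1_def
        by (rule Bochner_Integration.integrable_bound[OF intS]) (auto simp: indicator_def)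
      have "emeasure N1 (space MC \<times> space MB) = ennreal (\<integral>\<omega>. g1 \<omega> * indicator {x\<in>space M. C x \<in> space MC \<and> B x \<in> space MB} \<omega> \<partial>M)"
        unfolding N1_def by (rule em) (auto simp: g1pos ig1)
      then show ?thesis by simp
    qed
  qed
  have mCB1: "(\<lambda>\<omega>. (C \<omega>, B \<omega>)) \<in> measurable (density M (\<lambda>\<omega>. ennreal (g1 \<omega>))) (MC \<Otimes>\<^sub>M MB)"
    using measurable_Pair[OF mC mB] by (simp cong: measurable_cong_sets)
  have mCB2: "(\<lambda>\<omega>. (C \<omega>, B \<omega>)) \<in> measurable (density M (\<lambda>\<omega>. ennreal (g2 \<omega>))) (MC \<Otimes>\<^sub>M MB)"
    using measurable_Pair[OF mC mB] by (simp cong: measurable_cong_sets)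
  have i1: "integral\<^sup>L N1 \<phi> = (\<integral>\<omega>. g1 \<omega> * \<phi> (C \<omega>, B \<omega>) \<partial>M)"
  proof -
    have "integral\<^sup>L N1 \<phi> = integral\<^sup>L (density M (\<lambda>\<omega>. ennreal (g1 \<omega>))) (\<lambda>\<omega>. \<phi> (C \<omega>, B \<omega>))"
      unfolding N1_def by (rule integral_distr[OF mCB1 phi])
    also have "\<dots> = (\<integral>\<omega>. g1 \<omega> *\<^sub>R \<phi> (C \<omega>, B \<omega>) \<partial>M)"
      by (rule integral_density) (auto simp: g1pos)
    finally show ?thesis by simp
  qed
  have i2: "integral\<^sup>L N2 \<phi> = (\<integral>\<omega>. g2 \<omega> * \<phi> (C \<omega>, B \<omega>) \<partial>M)"
  proof -
    have "integral\<^sup>L N2 \<phi> = integral\<^sup>L (density M (\<lambda>\<omega>. ennreal (g2 \<omega>))) (\<lambda>\<omega>. \<phi> (C \<omega>, B \<omega>))"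
      unfolding N2_def by (rule integral_distr[OF mCB2 phi])
    also have "\<dots> = (\<integral>\<omega>. g2 \<omega> *\<^sub>R \<phi> (C \<omega>, B \<omega>) \<partial>M)"
      by (rule integral_density) (auto simp: g2pos)
    finally show ?thesis by simp
  qed
  have "(\<integral>\<omega>. g1 \<omega> * \<phi> (C \<omega>, B \<omega>) \<partial>M) = (\<integral>\<omega>. g2 \<omega> * \<phi> (C \<omega>, B \<omega>) \<partial>M)"
    using i1 i2 \<open>N1 = N2\<close> by simp
  then show ?thesis unfolding g1_def g2_def p_def .
qed

lemma ae_eq_from_sets:
  fixes f g :: "'a \<Rightarrow> real"
  assumes sfs: "sigma_finite_subalgebra M F"
    and [measurable]: "f \<in> borel_measurable F" "g \<in> borel_measurable F"
    and fi: "integrable M f" and gi: "integrable M g"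
    and eq: "\<And>A. A \<in> sets F \<Longrightarrow> (\<integral>x. indicator A x * f x \<partial>M) = (\<integral>x. indicator A x * g x \<partial>M)"
  shows "AE x in M. f x = g x"
proof -
  interpret sigma_finite_subalgebra M F by fact
  have [measurable]: "f \<in> borel_measurable M" by (rule measurable_from_subalg[OF subalg]) simp
  have "AE x in M. real_cond_exp M F f x = g x"
    by (rule real_cond_exp_charact) (auto simp: set_lebesgue_integral_def eq fi gi)
  moreover have "AE x in M. real_cond_exp M F f x = f x"
    by (rule real_cond_exp_F_meas) (auto simp: fi)
  ultimately show ?thesis by eventually_elim simp
qed

lemma cexp_add_meas:
  assumes P: "prob_space M" and sfs: "sigma_finite_subalgebra M F"
    and g[measurable]: "g \<in> borel_measurable F" and f: "integrable M f"
  shows "AE x in M. real_cond_exp M F (\<lambda>x. g x + f x) x = g x + real_cond_exp M F f x"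
proof -
  interpret prob_space M by fact
  interpret F: sigma_finite_subalgebra M F by fact
  have gM[measurable]: "g \<in> borel_measurable M" by (rule measurable_from_subalg[OF F.subalg g])
  have fM[measurable]: "f \<in> borel_measurable M" using f by auto
  define E where "E n = {x\<in>space M. \<bar>g x\<bar> \<le> real n}" for n :: nat
  have EF[measurable]: "E n \<in> sets F" for n
  proof -
    have "{x\<in>space F. \<bar>g x\<bar> \<le> real n} \<in> sets F" by measurable
    moreover have "space F = space M" using F.subalg by (simp add: subalgebra_def)
    ultimately show ?thesis by (simp add: E_def)
  qed
  have EM[measurable]: "E n \<in> sets M" for n
    using EF[of n] F.subalg by (auto simp: subalgebra_def)
  have loc: "AE x in M. x \<in> E n \<longrightarrow> real_cond_exp M F (\<lambda>x. g x + f x) x = g x + real_cond_exp M F f x" for n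
  proof -
    define u where "u = (\<lambda>x. g x + f x)"
    have [measurable]: "u \<in> borel_measurable M" unfolding u_def by simp
    have iF[measurable]: "(\<lambda>x. indicator (E n) x :: ennreal) \<in> borel_measurable F" by simp
    have a1: "AE x in M. indicator (E n) x * nn_cond_exp M F (\<lambda>x. ennreal (u x)) x
               = nn_cond_exp M F (\<lambda>x. indicator (E n) x * ennreal (u x)) x"
      by (rule F.nn_cond_exp_prod) auto
    have a2: "AE x in M. indicator (E n) x * nn_cond_exp M F (\<lambda>x. ennreal (- u x)) x
               = nn_cond_exp M F (\<lambda>x. indicator (E n) x * ennreal (- u x)) x"
      by (rule F.nn_cond_exp_prod) auto
    have b1: "(\<lambda>x. indicator (E n) x * ennreal (u x)) = (\<lambda>x. ennreal (indicator (E n) x * u x))"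
      by (auto simp: indicator_def)
    have b2: "(\<lambda>x. indicator (E n) x * ennreal (- u x)) = (\<lambda>x. ennreal (- (indicator (E n) x * u x)))"
      by (auto simp: indicator_def)
    have c: "AE x in M. x \<in> E n \<longrightarrow> real_cond_exp M F u x = real_cond_exp M F (\<lambda>x. indicator (E n) x * u x) x"
      using a1 a2 unfolding b1 b2 real_cond_exp_def by eventually_elim auto
    have ig: "integrable M (\<lambda>x. indicator (E n) x * g x)"
      by (rule Bochner_Integration.integrable_bound[OF integrable_const[of "real n"]])
         (auto simp: E_def indicator_def)
    have ifn: "integrable M (\<lambda>x. indicator (E n) x * f x)"
      using integrable_mult_indicator[OF EM f] by simp
    have d0: "(\<lambda>x. indicator (E n) x * u x) = (\<lambda>x. indicator (E n) x * g x + indicator (E n) x * f x)"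
      by (auto simp: u_def algebra_simps)
    have d1: "AE x in M. real_cond_exp M F (\<lambda>x. indicator (E n) x * g x + indicator (E n) x * f x) x
       = real_cond_exp M F (\<lambda>x. indicator (E n) x * g x) x + real_cond_exp M F (\<lambda>x. indicator (E n) x * f x) x"
      by (rule F.real_cond_exp_add[OF ig ifn])
    have d2: "AE x in M. real_cond_exp M F (\<lambda>x. indicator (E n) x * g x) x = indicator (E n) x * g x"
      by (rule F.real_cond_exp_F_meas[OF ig]) simp
    have d3: "AE x in M. real_cond_exp M F (\<lambda>x. indicator (E n) x * f x) x = indicator (E n) x * real_cond_exp M F f x"
      by (rule F.real_cond_exp_mult) (auto simp: ifn)
    show ?thesis using c d1 d2 d3 unfolding d0 by eventually_elim (simp add: u_def indicator_def)
  qed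
  have "AE x in M. \<forall>n. x \<in> E n \<longrightarrow> real_cond_exp M F (\<lambda>x. g x + f x) x = g x + real_cond_exp M F f x"
    by (subst AE_all_countable) (rule allI, rule loc)
  then show ?thesis
  proof (rule AE_mp[OF _ AE_I2], intro impI)
    fix x assume x: "x \<in> space M" and h: "\<forall>n. x \<in> E n \<longrightarrow> real_cond_exp M F (\<lambda>x. g x + f x) x = g x + real_cond_exp M F f x"
    have "x \<in> E (nat \<lceil>\<bar>g x\<bar>\<rceil>)" using x by (auto simp: E_def real_nat_ceiling_ge)
    then show "real_cond_exp M F (\<lambda>x. g x + f x) x = g x + real_cond_exp M F f x" using h by blast
  qed
qed

lemma transfer_ae:
  assumes P: "prob_space M" and mV[measurable]: "V \<in> M \<rightarrow>\<^sub>M MV"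
    and rho: "integrable M \<rho>" and rpos: "AE x in M. 0 \<le> \<rho> x"
    and mpi[measurable]: "\<pi> \<in> borel_measurable MV"
    and pi: "AE x in M. real_cond_exp M (gen M MV V) \<rho> x = \<pi> (V x)"
    and pipos: "AE x in M. 0 < \<pi> (V x)"
    and Qm: "{v\<in>space MV. Q v} \<in> sets MV"
    and hyp: "AE x in M. \<rho> x \<noteq> 0 \<longrightarrow> Q (V x)"
  shows "AE x in M. Q (V x)"
proof -
  interpret prob_space M by fact
  interpret F: sigma_finite_subalgebra M "gen M MV V" by (rule gen_sfs[OF P mV])
  have [measurable]: "\<rho> \<in> borel_measurable M" using rho by auto
  define E where "E = {x\<in>space M. V x \<in> space MV - {v\<in>space MV. Q v}}"
  have EF: "E \<in> sets (gen M MV V)" unfolding E_def by (rule gen_set[OF mV]) (use Qm in auto)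
  have EM[measurable]: "E \<in> sets M" using EF F.subalg by (auto simp: subalgebra_def)
  have piV[measurable]: "(\<lambda>x. \<pi> (V x)) \<in> borel_measurable M" by simp
  have "(\<integral>x. indicator E x * \<rho> x \<partial>M) = 0"
  proof -
    have "AE x in M. indicator E x * \<rho> x = 0"
      using hyp by eventually_elim (auto simp: E_def indicator_def)
    then have "(\<integral>x. indicator E x * \<rho> x \<partial>M) = (\<integral>x. 0 \<partial>M)"
      by (intro integral_cong_AE) auto
    then show ?thesis by simp
  qed
  moreover have "(\<integral>x. indicator E x * \<rho> x \<partial>M) = (\<integral>x. indicator E x * real_cond_exp M (gen M MV V) \<rho> x \<partial>M)"
    by (rule F.real_cond_exp_intg(2)[symmetric])
       (auto simp: EF integrable_mult_indicator[OF EM rho, simplified] intro!: borel_measurable_indicator)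
  moreover have i1: "integrable M (\<lambda>x. indicator E x * real_cond_exp M (gen M MV V) \<rho> x)"
    by (rule F.real_cond_exp_intg(1)) (auto simp: EF integrable_mult_indicator[OF EM rho, simplified] intro!: borel_measurable_indicator)
  moreover have "(\<integral>x. indicator E x * real_cond_exp M (gen M MV V) \<rho> x \<partial>M) = (\<integral>x. indicator E x * \<pi> (V x) \<partial>M)"
    by (rule integral_cong_AE) (use pi in \<open>auto elim!: eventually_mono\<close>)
  moreover have i2: "integrable M (\<lambda>x. indicator E x * \<pi> (V x))"
    using i1 by (rule integrable_cong_AE_imp) (use pi in \<open>auto elim!: eventually_mono\<close>)
  ultimately have zero: "(\<integral>x. indicator E x * \<pi> (V x) \<partial>M) = 0" by simp
  have nn: "AE x in M. 0 \<le> indicator E x * \<pi> (V x)"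
    using pipos by eventually_elim (simp add: indicator_def)
  have "AE x in M. indicator E x * \<pi> (V x) = 0"
    using integral_nonneg_eq_0_iff_AE[OF i2 nn] zero by blast
  then show ?thesis using pipos AE_space
    by eventually_elim (auto simp: E_def indicator_def measurable_space[OF mV])
qed

lemma gen_comp:
  assumes W: "W \<in> M \<rightarrow>\<^sub>M N" and phi: "\<phi> \<in> N \<rightarrow>\<^sub>M L"
    and eq: "\<And>\<omega>. \<omega> \<in> space M \<Longrightarrow> f \<omega> = \<phi> (W \<omega>)"
  shows "f \<in> gen M N W \<rightarrow>\<^sub>M L"
  using gen_meas[OF W phi] by (rule measurable_cong[THEN iffD1, rotated]) (simp add: eq gen_def)

lemma ib:
  fixes f g :: "'a \<Rightarrow> real"
  assumes "integrable M f" "g \<in> borel_measurable M" "AE x in M. \<bar>g x\<bar> \<le> \<bar>f x\<bar>"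
  shows "integrable M g"
  using assms by (intro Bochner_Integration.integrable_bound[OF assms(1)]) auto

lemma ci_swap:
  assumes "cond_indep_on M Q MA A MB B MC C"
  shows "cond_indep_on M Q MB B MA A MC C"
  unfolding cond_indep_on_def
proof (intro ballI)
  fix S T assume S: "S \<in> sets MB" and T: "T \<in> sets MA"
  have e: "{x \<in> space M. B x \<in> S \<and> A x \<in> T} = {x \<in> space M. A x \<in> T \<and> B x \<in> S}" by auto
  show "AE \<omega> in M. Q \<omega> \<longrightarrow>
        cexp M MC C (indicator {x \<in> space M. B x \<in> S \<and> A x \<in> T}) \<omega> =
        cexp M MC C (indicator {x \<in> space M. B x \<in> S}) \<omega> * cexp M MC C (indicator {x \<in> space M. A x \<in> T}) \<omega>"
    using assms S T unfolding cond_indep_on_def e by (auto simp: mult.commute)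
qed

lemma sig_le: "(x::real) * (1 - x) \<le> 1/4"
  using zero_le_power2[of "x - 1/2"] by (simp add: power2_eq_square algebra_simps)

lemma abs_div_le: "0 < (s::real) \<Longrightarrow> s \<le> 1 \<Longrightarrow> \<bar>a\<bar> \<le> \<bar>a / s\<bar>"
  by (simp add: abs_div le_divide_eq mult_left_le)

lemma divq: "(a::real) * B / (q * s) - c / (q * s) = (a * (B / s) - c / s) / q"
  by (cases "q = 0"; cases "s = 0") (simp_all add: field_simps)

lemma ib2:
  fixes f g k :: "'a \<Rightarrow> real"
  assumes "integrable M f" "g \<in> borel_measurable M" "AE x in M. \<bar>k x\<bar> \<le> 1"
    "\<And>x. x \<in> space M \<Longrightarrow> g x = k x * f x"
  shows "integrable M g"
proof (rule ib[OF assms(1,2)])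
  show "AE x in M. \<bar>g x\<bar> \<le> \<bar>f x\<bar>"
    using assms(3) AE_space by eventually_elim (simp add: assms(4) abs_mult mult_left_le_one_le)
qed

lemma integral_cong_AE2:
  fixes f g :: "'a \<Rightarrow> real"
  assumes "f \<in> borel_measurable M" "g \<in> borel_measurable M" "AE x in M. P x"
    "\<And>x. x \<in> space M \<Longrightarrow> P x \<Longrightarrow> f x = g x"
  shows "integral\<^sup>L M f = integral\<^sup>L M g"
proof (rule integral_cong_AE[OF assms(1,2)])
  show "AE x in M. f x = g x" using assms(3) AE_space by eventually_elim (simp add: assms(4))
qed

lemma integrable_cong_AE2:
  fixes f g :: "'a \<Rightarrow> real"
  assumes "integrable M f" "g \<in> borel_measurable M" "AE x in M. P x"
    "\<And>x. x \<in> space M \<Longrightarrow> P x \<Longrightarrow> f x = g x"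
  shows "integrable M g"
proof (rule integrable_cong_AE_imp[OF assms(1,2)])
  show "AE x in M. f x = g x" using assms(3) AE_space by eventually_elim (simp add: assms(4))
qed

theorem proposition1:
  fixes M :: "'a measure" and MV :: "'v measure" and MU :: "'u measure"
    and R X Z Y Y0 Y1 :: "'a \<Rightarrow> real" and V :: "'a \<Rightarrow> 'v" and U :: "'a \<Rightarrow> 'u"
    and eps :: "real \<Rightarrow> 'v \<Rightarrow> 'u \<Rightarrow> real"
    and zeta0 zeta :: "'v \<Rightarrow> 'u \<Rightarrow> real" and beta :: "'v \<Rightarrow> real \<Rightarrow> real"
    and om :: "'v \<Rightarrow> real" and mu :: "'v \<Rightarrow> real \<Rightarrow> real"
    and gY gX :: "real \<Rightarrow> 'v \<Rightarrow> real"
    and ce cz cp :: "'v \<Rightarrow> real \<Rightarrow> real" and xi :: "'v \<Rightarrow> real"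
  assumes P: "prob_space M"
    (* random variables *)
    and mR: "R \<in> borel_measurable M" and mX: "X \<in> borel_measurable M"
    and mZ: "Z \<in> borel_measurable M" and mY: "Y \<in> borel_measurable M"
    and mV: "V \<in> M \<rightarrow>\<^sub>M MV" and mU: "U \<in> M \<rightarrow>\<^sub>M MU"
    and R01: "\<forall>\<omega>\<in>space M. R \<omega> \<in> {0, 1}"
    and X01: "\<forall>\<omega>\<in>space M. X \<omega> \<in> {0, 1}"
    and Z01: "\<forall>\<omega>\<in>space M. Z \<omega> \<in> {0, 1}"
    and intY: "integrable M Y" and intY0: "integrable M Y0" and intY1: "integrable M Y1"
    and consist: "\<forall>\<omega>\<in>space M. Y \<omega> = X \<omega> * Y1 \<omega> + (1 - X \<omega>) * Y0 \<omega>"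
    (* (A1) Y_x independent of X given V, U, R *)
    and A1_0: "cond_indep_on M (\<lambda>_. True) borel Y0 borel X (MV \<Otimes>\<^sub>M MU \<Otimes>\<^sub>M borel)
                 (\<lambda>\<omega>. (V \<omega>, U \<omega>, R \<omega>))"
    and A1_1: "cond_indep_on M (\<lambda>_. True) borel Y1 borel X (MV \<Otimes>\<^sub>M MU \<Otimes>\<^sub>M borel)
                 (\<lambda>\<omega>. (V \<omega>, U \<omega>, R \<omega>))"
    (* (A2) *)
    and A2_U: "cond_indep_on M (\<lambda>\<omega>. R \<omega> = 1) borel Z MU U (MV \<Otimes>\<^sub>M borel) (\<lambda>\<omega>. (V \<omega>, R \<omega>))"
    and A2_Y: "cond_indep_on M (\<lambda>\<omega>. R \<omega> = 1) borel Z borel Y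
                 (borel \<Otimes>\<^sub>M MV \<Otimes>\<^sub>M MU \<Otimes>\<^sub>M borel) (\<lambda>\<omega>. (X \<omega>, V \<omega>, U \<omega>, R \<omega>))"
    (* versions gY z v = E(Y | Z = z, V = v, R = 1), gX z v = E(X | Z = z, V = v, R = 1) *)
    and mgY: "(\<lambda>(z, v). gY z v) \<in> borel \<Otimes>\<^sub>M MV \<rightarrow>\<^sub>M borel"
    and mgX: "(\<lambda>(z, v). gX z v) \<in> borel \<Otimes>\<^sub>M MV \<rightarrow>\<^sub>M borel"
    and gY: "AE \<omega> in M. R \<omega> = 1 \<longrightarrow>
               cexp M (borel \<Otimes>\<^sub>M MV \<Otimes>\<^sub>M borel) (\<lambda>\<omega>. (Z \<omega>, V \<omega>, R \<omega>)) Y \<omega> = gY (Z \<omega>) (V \<omega>)"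
    and gX: "AE \<omega> in M. R \<omega> = 1 \<longrightarrow>
               cexp M (borel \<Otimes>\<^sub>M MV \<Otimes>\<^sub>M borel) (\<lambda>\<omega>. (Z \<omega>, V \<omega>, R \<omega>)) X \<omega> = gX (Z \<omega>) (V \<omega>)"
    (* Z positivity within R = 1 and instrument relevance (Z, X dependent given V, R = 1) *)
    and Zpos: "AE \<omega> in M. R \<omega> = 1 \<longrightarrow>
               0 < cexp M (MV \<Otimes>\<^sub>M borel) (\<lambda>\<omega>. (V \<omega>, R \<omega>)) (indicator {x\<in>space M. Z x = 1}) \<omega> \<and>
               cexp M (MV \<Otimes>\<^sub>M borel) (\<lambda>\<omega>. (V \<omega>, R \<omega>)) (indicator {x\<in>space M. Z x = 1}) \<omega> < 1"
    and relevance: "AE \<omega> in M. R \<omega> = 1 \<longrightarrow> gX 1 (V \<omega>) \<noteq> gX 0 (V \<omega>)"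
    (* relaxed outcome model *)
    and mzeta0: "(\<lambda>(v, u). zeta0 v u) \<in> MV \<Otimes>\<^sub>M MU \<rightarrow>\<^sub>M borel"
    and mzeta: "(\<lambda>(v, u). zeta v u) \<in> MV \<Otimes>\<^sub>M MU \<rightarrow>\<^sub>M borel"
    and mbeta: "(\<lambda>(v, r). beta v r) \<in> MV \<Otimes>\<^sub>M borel \<rightarrow>\<^sub>M borel"
    and model: "AE \<omega> in M.
       cexp M (borel \<Otimes>\<^sub>M MV \<Otimes>\<^sub>M MU \<Otimes>\<^sub>M borel) (\<lambda>\<omega>. (X \<omega>, V \<omega>, U \<omega>, R \<omega>)) Y \<omega> =
         zeta0 (V \<omega>) (U \<omega>) + zeta (V \<omega>) (U \<omega>) * R \<omega> + beta (V \<omega>) (R \<omega>) * X \<omega>"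
    (* eps r v u = E(X | V = v, U = u, R = r); treatment positivity *)
    and meps: "(\<lambda>(r, v, u). eps r v u) \<in> borel \<Otimes>\<^sub>M MV \<Otimes>\<^sub>M MU \<rightarrow>\<^sub>M borel"
    and eps: "AE \<omega> in M. cexp M (MV \<Otimes>\<^sub>M MU \<Otimes>\<^sub>M borel) (\<lambda>\<omega>. (V \<omega>, U \<omega>, R \<omega>)) X \<omega>
                = eps (R \<omega>) (V \<omega>) (U \<omega>)"
    and Xpos: "AE \<omega> in M. 0 < eps (R \<omega>) (V \<omega>) (U \<omega>) \<and> eps (R \<omega>) (V \<omega>) (U \<omega>) < 1"
    (* omega(v) = P(R = 1 | V = v); overlap *)
    and mom: "om \<in> MV \<rightarrow>\<^sub>M borel"
    and om: "AE \<omega> in M. cexp M MV V R \<omega> = om (V \<omega>)"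
    and overlap: "AE \<omega> in M. 0 < om (V \<omega>) \<and> om (V \<omega>) < 1"
    (* mu(v, r) = E(X | V = v, R = r); sigma_0^2(V) > 0 *)
    and mmu: "(\<lambda>(v, r). mu v r) \<in> MV \<Otimes>\<^sub>M borel \<rightarrow>\<^sub>M borel"
    and mu: "AE \<omega> in M. cexp M (MV \<Otimes>\<^sub>M borel) (\<lambda>\<omega>. (V \<omega>, R \<omega>)) X \<omega> = mu (V \<omega>) (R \<omega>)"
    and sig0pos: "AE \<omega> in M. 0 < sig2 mu (V \<omega>) 0"
    (* conditional covariances Cov{eps_r(V,U), zeta_r(V,U) | V, R = r},
       with zeta_r(V,U) = E(Y | V,U,R = r, X = 0) = zeta0(V,U) + zeta(V,U) r *)
    and int_z: "integrable M (\<lambda>\<omega>. zeta0 (V \<omega>) (U \<omega>) + zeta (V \<omega>) (U \<omega>) * R \<omega>)"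
    and int_ez: "integrable M (\<lambda>\<omega>. eps (R \<omega>) (V \<omega>) (U \<omega>) *
                   (zeta0 (V \<omega>) (U \<omega>) + zeta (V \<omega>) (U \<omega>) * R \<omega>))"
    and mce: "(\<lambda>(v, r). ce v r) \<in> MV \<Otimes>\<^sub>M borel \<rightarrow>\<^sub>M borel"
    and mcz: "(\<lambda>(v, r). cz v r) \<in> MV \<Otimes>\<^sub>M borel \<rightarrow>\<^sub>M borel"
    and mcp: "(\<lambda>(v, r). cp v r) \<in> MV \<Otimes>\<^sub>M borel \<rightarrow>\<^sub>M borel"
    and ce: "AE \<omega> in M. cexp M (MV \<Otimes>\<^sub>M borel) (\<lambda>\<omega>. (V \<omega>, R \<omega>))
               (\<lambda>\<omega>. eps (R \<omega>) (V \<omega>) (U \<omega>)) \<omega> = ce (V \<omega>) (R \<omega>)"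
    and cz: "AE \<omega> in M. cexp M (MV \<Otimes>\<^sub>M borel) (\<lambda>\<omega>. (V \<omega>, R \<omega>))
               (\<lambda>\<omega>. zeta0 (V \<omega>) (U \<omega>) + zeta (V \<omega>) (U \<omega>) * R \<omega>) \<omega> = cz (V \<omega>) (R \<omega>)"
    and cp: "AE \<omega> in M. cexp M (MV \<Otimes>\<^sub>M borel) (\<lambda>\<omega>. (V \<omega>, R \<omega>))
               (\<lambda>\<omega>. eps (R \<omega>) (V \<omega>) (U \<omega>) * (zeta0 (V \<omega>) (U \<omega>) + zeta (V \<omega>) (U \<omega>) * R \<omega>)) \<omega>
             = cp (V \<omega>) (R \<omega>)"
    and xi: "\<And>v. xi v = (cp v 0 - ce v 0 * cz v 0) - (cp v 1 - ce v 1 * cz v 1)"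
    (* existence of the expectations in the identification formulas *)
    and int_eta: "integrable M (\<lambda>\<omega>. (X \<omega> - mu (V \<omega>) (R \<omega>)) * Y \<omega> /
                    (fRV om (R \<omega>) (V \<omega>) * sig2 mu (V \<omega>) 0))"
  shows "(AE \<omega> in M. beta (V \<omega>) 0 =
            cexp M MV V (\<lambda>\<omega>.
               (wald gY gX (V \<omega>) * sig2 mu (V \<omega>) 1 - xi (V \<omega>)) / sig2 mu (V \<omega>) 0
               - (2 * R \<omega> - 1) * (X \<omega> - mu (V \<omega>) (R \<omega>)) * Y \<omega> /
                   (fRV om (R \<omega>) (V \<omega>) * sig2 mu (V \<omega>) 0)) \<omega>)
       \<and> (let q = measure M {\<omega>\<in>space M. R \<omega> = 0} in
           (\<integral>\<omega>. (1 - R \<omega>) * (Y1 \<omega> - Y0 \<omega>) \<partial>M) / q =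
           (\<integral>\<omega>. (1 - R \<omega>) * (wald gY gX (V \<omega>) * sig2 mu (V \<omega>) 1 - xi (V \<omega>)) /
                    (q * sig2 mu (V \<omega>) 0)
                 - (R \<omega> / fRV om (R \<omega>) (V \<omega>) - 1) * ((X \<omega> - mu (V \<omega>) (R \<omega>)) * Y \<omega>) /
                    (q * sig2 mu (V \<omega>) 0) \<partial>M))"
proof -
  interpret prob_space M by (rule P)
  note [measurable] = mR mX mZ mY mV mU
  have [measurable]: "Y0 \<in> borel_measurable M" using intY0 by auto
  have [measurable]: "Y1 \<in> borel_measurable M" using intY1 by auto
  have mz0[measurable (raw)]: "(\<lambda>x. zeta0 (f x) (g x)) \<in> borel_measurable N"
    if "f \<in> N \<rightarrow>\<^sub>M MV" "g \<in> N \<rightarrow>\<^sub>M MU" for f g and N :: "'a measure"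
    using measurable_compose[OF measurable_Pair[OF that] mzeta0] by simp
  have mz[measurable (raw)]: "(\<lambda>x. zeta (f x) (g x)) \<in> borel_measurable N"
    if "f \<in> N \<rightarrow>\<^sub>M MV" "g \<in> N \<rightarrow>\<^sub>M MU" for f g and N :: "'a measure"
    using measurable_compose[OF measurable_Pair[OF that] mzeta] by simp
  have mb[measurable (raw)]: "(\<lambda>x. beta (f x) (g x)) \<in> borel_measurable N"
    if "f \<in> N \<rightarrow>\<^sub>M MV" "g \<in> N \<rightarrow>\<^sub>M borel" for f g and N :: "'a measure"
    using measurable_compose[OF measurable_Pair[OF that] mbeta] by simp
  have mmu'[measurable (raw)]: "(\<lambda>x. mu (f x) (g x)) \<in> borel_measurable N"
    if "f \<in> N \<rightarrow>\<^sub>M MV" "g \<in> N \<rightarrow>\<^sub>M borel" for f g and N :: "'a measure"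
    using measurable_compose[OF measurable_Pair[OF that] mmu] by simp
  have mce'[measurable (raw)]: "(\<lambda>x. ce (f x) (g x)) \<in> borel_measurable N"
    if "f \<in> N \<rightarrow>\<^sub>M MV" "g \<in> N \<rightarrow>\<^sub>M borel" for f g and N :: "'a measure"
    using measurable_compose[OF measurable_Pair[OF that] mce] by simp
  have mcz'[measurable (raw)]: "(\<lambda>x. cz (f x) (g x)) \<in> borel_measurable N"
    if "f \<in> N \<rightarrow>\<^sub>M MV" "g \<in> N \<rightarrow>\<^sub>M borel" for f g and N :: "'a measure"
    using measurable_compose[OF measurable_Pair[OF that] mcz] by simp
  have mcp'[measurable (raw)]: "(\<lambda>x. cp (f x) (g x)) \<in> borel_measurable N"
    if "f \<in> N \<rightarrow>\<^sub>M MV" "g \<in> N \<rightarrow>\<^sub>M borel" for f g and N :: "'a measure"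
    using measurable_compose[OF measurable_Pair[OF that] mcp] by simp
  have mgY'[measurable (raw)]: "(\<lambda>x. gY (f x) (g x)) \<in> borel_measurable N"
    if "f \<in> N \<rightarrow>\<^sub>M borel" "g \<in> N \<rightarrow>\<^sub>M MV" for f g and N :: "'a measure"
    using measurable_compose[OF measurable_Pair[OF that] mgY] by simp
  have mgX'[measurable (raw)]: "(\<lambda>x. gX (f x) (g x)) \<in> borel_measurable N"
    if "f \<in> N \<rightarrow>\<^sub>M borel" "g \<in> N \<rightarrow>\<^sub>M MV" for f g and N :: "'a measure"
    using measurable_compose[OF measurable_Pair[OF that] mgX] by simp
  have meps'[measurable (raw)]: "(\<lambda>x. eps (f x) (g x) (h x)) \<in> borel_measurable N"
    if "f \<in> N \<rightarrow>\<^sub>M borel" "g \<in> N \<rightarrow>\<^sub>M MV" "h \<in> N \<rightarrow>\<^sub>M MU" for f g h and N :: "'a measure"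
    using measurable_compose[OF measurable_Pair[OF that(1) measurable_Pair[OF that(2,3)]] meps] by simp
  have mom'[measurable (raw)]: "(\<lambda>x. om (f x)) \<in> borel_measurable N"
    if "f \<in> N \<rightarrow>\<^sub>M MV" for f and N :: "'a measure"
    using measurable_compose[OF that mom] by simp
  have mxi'[measurable (raw)]: "(\<lambda>x. xi (f x)) \<in> borel_measurable N"
    if [measurable]: "f \<in> N \<rightarrow>\<^sub>M MV" for f and N :: "'a measure"
    unfolding xi by measurable
  have msig[measurable (raw)]: "(\<lambda>x. sig2 mu (f x) (g x)) \<in> borel_measurable N"
    if [measurable]: "f \<in> N \<rightarrow>\<^sub>M MV" "g \<in> N \<rightarrow>\<^sub>M borel" for f g and N :: "'a measure"
    unfolding sig2_def by measurable
  have mfRV[measurable (raw)]: "(\<lambda>x. fRV om (g x) (f x)) \<in> borel_measurable N"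
    if [measurable]: "f \<in> N \<rightarrow>\<^sub>M MV" "g \<in> N \<rightarrow>\<^sub>M borel" for f g and N :: "'a measure"
    unfolding fRV_def by measurable
  have mwald[measurable (raw)]: "(\<lambda>x. wald gY gX (f x)) \<in> borel_measurable N"
    if [measurable]: "f \<in> N \<rightarrow>\<^sub>M MV" for f and N :: "'a measure"
    unfolding wald_def by measurable
  have mVUR: "(\<lambda>\<omega>. (V \<omega>, U \<omega>, R \<omega>)) \<in> M \<rightarrow>\<^sub>M MV \<Otimes>\<^sub>M MU \<Otimes>\<^sub>M borel" by measurable
  have mXVUR: "(\<lambda>\<omega>. (X \<omega>, V \<omega>, U \<omega>, R \<omega>)) \<in> M \<rightarrow>\<^sub>M borel \<Otimes>\<^sub>M MV \<Otimes>\<^sub>M MU \<Otimes>\<^sub>M borel" by measurable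
  have mVR: "(\<lambda>\<omega>. (V \<omega>, R \<omega>)) \<in> M \<rightarrow>\<^sub>M MV \<Otimes>\<^sub>M borel" by measurable
  have mZVR: "(\<lambda>\<omega>. (Z \<omega>, V \<omega>, R \<omega>)) \<in> M \<rightarrow>\<^sub>M borel \<Otimes>\<^sub>M MV \<Otimes>\<^sub>M borel" by measurable
  define G1 where "G1 = gen M (MV \<Otimes>\<^sub>M MU \<Otimes>\<^sub>M borel) (\<lambda>\<omega>. (V \<omega>, U \<omega>, R \<omega>))"
  define G2 where "G2 = gen M (borel \<Otimes>\<^sub>M MV \<Otimes>\<^sub>M MU \<Otimes>\<^sub>M borel) (\<lambda>\<omega>. (X \<omega>, V \<omega>, U \<omega>, R \<omega>))"
  define H where "H = gen M (MV \<Otimes>\<^sub>M borel) (\<lambda>\<omega>. (V \<omega>, R \<omega>))"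
  define K where "K = gen M (borel \<Otimes>\<^sub>M MV \<Otimes>\<^sub>M borel) (\<lambda>\<omega>. (Z \<omega>, V \<omega>, R \<omega>))"
  define S where "S = gen M MV V"
  interpret G1: sigma_finite_subalgebra M G1 unfolding G1_def by (rule gen_sfs[OF P mVUR])
  interpret G2: sigma_finite_subalgebra M G2 unfolding G2_def by (rule gen_sfs[OF P mXVUR])
  interpret H: sigma_finite_subalgebra M H unfolding H_def by (rule gen_sfs[OF P mVR])
  interpret K: sigma_finite_subalgebra M K unfolding K_def by (rule gen_sfs[OF P mZVR])
  interpret S: sigma_finite_subalgebra M S unfolding S_def by (rule gen_sfs[OF P mV])
  have strans: "subalgebra A C" if "subalgebra A B" "subalgebra B C" for A B C :: "'a measure"
    using that by (auto simp: subalgebra_def)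
  have sub21: "subalgebra G2 G1" unfolding G1_def G2_def
    by (rule gen_sub[OF mXVUR, where \<phi>=snd]) auto
  have sub1H: "subalgebra G1 H" unfolding G1_def H_def
    by (rule gen_sub[OF mVUR, where \<phi>="\<lambda>p. (fst p, snd (snd p))"]) auto
  have subHS: "subalgebra H S" unfolding H_def S_def
    by (rule gen_sub[OF mVR, where \<phi>=fst]) auto
  have subKH: "subalgebra K H" unfolding K_def H_def
    by (rule gen_sub[OF mZVR, where \<phi>=snd]) auto
  have sub2H: "subalgebra G2 H" by (rule strans[OF sub21 sub1H])
  have sub1S: "subalgebra G1 S" by (rule strans[OF sub1H subHS])
  have sub2S: "subalgebra G2 S" by (rule strans[OF sub2H subHS])
  have subKS: "subalgebra K S" by (rule strans[OF subKH subHS])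
  have VS[measurable]: "V \<in> S \<rightarrow>\<^sub>M MV" unfolding S_def by (rule gen_comp[OF mV, where \<phi>=id]) auto
  have VH[measurable]: "V \<in> H \<rightarrow>\<^sub>M MV" unfolding H_def by (rule gen_comp[OF mVR, where \<phi>=fst]) auto
  have RH[measurable]: "R \<in> borel_measurable H" unfolding H_def by (rule gen_comp[OF mVR, where \<phi>=snd]) auto
  have VG1[measurable]: "V \<in> G1 \<rightarrow>\<^sub>M MV" unfolding G1_def by (rule gen_comp[OF mVUR, where \<phi>=fst]) auto
  have UG1[measurable]: "U \<in> G1 \<rightarrow>\<^sub>M MU" unfolding G1_def by (rule gen_comp[OF mVUR, where \<phi>="\<lambda>p. fst (snd p)"]) auto
  have RG1[measurable]: "R \<in> borel_measurable G1" unfolding G1_def by (rule gen_comp[OF mVUR, where \<phi>="\<lambda>p. snd (snd p)"]) auto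
  have XG2[measurable]: "X \<in> borel_measurable G2" unfolding G2_def by (rule gen_comp[OF mXVUR, where \<phi>=fst]) auto
  have VG2[measurable]: "V \<in> G2 \<rightarrow>\<^sub>M MV" unfolding G2_def by (rule gen_comp[OF mXVUR, where \<phi>="\<lambda>p. fst (snd p)"]) auto
  have UG2[measurable]: "U \<in> G2 \<rightarrow>\<^sub>M MU" unfolding G2_def by (rule gen_comp[OF mXVUR, where \<phi>="\<lambda>p. fst (snd (snd p))"]) auto
  have RG2[measurable]: "R \<in> borel_measurable G2" unfolding G2_def by (rule gen_comp[OF mXVUR, where \<phi>="\<lambda>p. snd (snd (snd p))"]) auto
  have ZK[measurable]: "Z \<in> borel_measurable K" unfolding K_def by (rule gen_comp[OF mZVR, where \<phi>=fst]) auto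
  have VK[measurable]: "V \<in> K \<rightarrow>\<^sub>M MV" unfolding K_def by (rule gen_comp[OF mZVR, where \<phi>="\<lambda>p. fst (snd p)"]) auto
  have RK[measurable]: "R \<in> borel_measurable K" unfolding K_def by (rule gen_comp[OF mZVR, where \<phi>="\<lambda>p. snd (snd p)"]) auto
  have setsG: "A \<in> sets M" if "A \<in> sets G" "subalgebra M G" for A G
    using that by (auto simp: subalgebra_def)
  have setsS: "A \<in> sets B" if "A \<in> sets C" "subalgebra B C" for A :: "'a set" and B C :: "'a measure"
    using that by (auto simp: subalgebra_def)
  have X01': "X \<omega> * X \<omega> = X \<omega>" if "\<omega> \<in> space M" for \<omega> using X01 that by auto
  have intX: "integrable M X"
    by (rule ib[OF integrable_const[of 1]]) (use X01 in \<open>auto intro!: AE_I2\<close>)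
  have intR: "integrable M R"
    by (rule ib[OF integrable_const[of 1]]) (use R01 in \<open>auto intro!: AE_I2\<close>)
  have model': "AE \<omega> in M. real_cond_exp M G2 Y \<omega> = zeta0 (V \<omega>) (U \<omega>) + zeta (V \<omega>) (U \<omega>) * R \<omega> + beta (V \<omega>) (R \<omega>) * X \<omega>"
    using model unfolding cexp_def G2_def .
  have eps': "AE \<omega> in M. real_cond_exp M G1 X \<omega> = eps (R \<omega>) (V \<omega>) (U \<omega>)"
    using eps unfolding cexp_def G1_def .
  have om': "AE \<omega> in M. real_cond_exp M S R \<omega> = om (V \<omega>)"
    using om unfolding cexp_def S_def .
  have mu': "AE \<omega> in M. real_cond_exp M H X \<omega> = mu (V \<omega>) (R \<omega>)"
    using mu unfolding cexp_def H_def .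
  have ce': "AE \<omega> in M. real_cond_exp M H (\<lambda>\<omega>. eps (R \<omega>) (V \<omega>) (U \<omega>)) \<omega> = ce (V \<omega>) (R \<omega>)"
    using ce unfolding cexp_def H_def .
  have cz': "AE \<omega> in M. real_cond_exp M H (\<lambda>\<omega>. zeta0 (V \<omega>) (U \<omega>) + zeta (V \<omega>) (U \<omega>) * R \<omega>) \<omega> = cz (V \<omega>) (R \<omega>)"
    using cz unfolding cexp_def H_def .
  have cp': "AE \<omega> in M. real_cond_exp M H (\<lambda>\<omega>. eps (R \<omega>) (V \<omega>) (U \<omega>) * (zeta0 (V \<omega>) (U \<omega>) + zeta (V \<omega>) (U \<omega>) * R \<omega>)) \<omega> = cp (V \<omega>) (R \<omega>)"
    using cp unfolding cexp_def H_def .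
  have gY': "AE \<omega> in M. R \<omega> = 1 \<longrightarrow> real_cond_exp M K Y \<omega> = gY (Z \<omega>) (V \<omega>)"
    using gY unfolding cexp_def K_def .
  have gX': "AE \<omega> in M. R \<omega> = 1 \<longrightarrow> real_cond_exp M K X \<omega> = gX (Z \<omega>) (V \<omega>)"
    using gX unfolding cexp_def K_def .
  have mu01: "AE \<omega> in M. 0 \<le> mu (V \<omega>) (R \<omega>) \<and> mu (V \<omega>) (R \<omega>) \<le> 1"
  proof -
    have "AE \<omega> in M. 0 \<le> real_cond_exp M H X \<omega>"
      by (rule H.real_cond_exp_ge_c[OF intX]) (use X01 in \<open>auto intro!: AE_I2\<close>)
    moreover have "AE \<omega> in M. real_cond_exp M H X \<omega> \<le> 1"
      by (rule H.real_cond_exp_le_c[OF intX]) (use X01 in \<open>auto intro!: AE_I2\<close>)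
    ultimately show ?thesis using mu' by eventually_elim auto
  qed
  define h where "h = (\<lambda>\<omega>. (2 * R \<omega> - 1) * (X \<omega> - mu (V \<omega>) (R \<omega>)) * Y \<omega> /
                   (fRV om (R \<omega>) (V \<omega>) * sig2 mu (V \<omega>) 0))"
  define Gf where "Gf = (\<lambda>v. (wald gY gX v * sig2 mu v 1 - xi v) / sig2 mu v 0)"
  have [measurable]: "h \<in> borel_measurable M" unfolding h_def by measurable
  have [measurable]: "(\<lambda>\<omega>. Gf (V \<omega>)) \<in> borel_measurable S" unfolding Gf_def by measurable
  have [measurable]: "(\<lambda>\<omega>. Gf (V \<omega>)) \<in> borel_measurable M" unfolding Gf_def by measurable
  have inth: "integrable M h"
  proof (rule ib[OF int_eta])
    show "AE \<omega> in M. \<bar>h \<omega>\<bar> \<le> \<bar>(X \<omega> - mu (V \<omega>) (R \<omega>)) * Y \<omega> / (fRV om (R \<omega>) (V \<omega>) * sig2 mu (V \<omega>) 0)\<bar>"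
    proof (rule AE_I2)
      fix \<omega> assume "\<omega> \<in> space M"
      then have "\<bar>2 * R \<omega> - 1\<bar> = 1" using R01 by auto
      then show "\<bar>h \<omega>\<bar> \<le> \<bar>(X \<omega> - mu (V \<omega>) (R \<omega>)) * Y \<omega> / (fRV om (R \<omega>) (V \<omega>) * sig2 mu (V \<omega>) 0)\<bar>"
        unfolding h_def by (simp add: abs_mult abs_div mult.assoc)
    qed
  qed measurable
  have ERS: "AE \<omega> in M. real_cond_exp M S (\<lambda>\<omega>. 1 - R \<omega>) \<omega> = 1 - om (V \<omega>)"
  proof -
    have "AE \<omega> in M. real_cond_exp M S (\<lambda>\<omega>. 1 - R \<omega>) \<omega> = real_cond_exp M S (\<lambda>\<omega>. 1) \<omega> - real_cond_exp M S R \<omega>"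
      by (rule S.real_cond_exp_diff[OF integrable_const intR])
    moreover have "AE \<omega> in M. real_cond_exp M S (\<lambda>\<omega>. 1) \<omega> = 1"
      by (rule S.real_cond_exp_F_meas[OF integrable_const]) simp
    ultimately show ?thesis using om' by eventually_elim simp
  qed
  have E1X: "AE \<omega> in M. real_cond_exp M G1 (\<lambda>\<omega>. 1 - X \<omega>) \<omega> = 1 - eps (R \<omega>) (V \<omega>) (U \<omega>)"
  proof -
    have "AE \<omega> in M. real_cond_exp M G1 (\<lambda>\<omega>. 1 - X \<omega>) \<omega> = real_cond_exp M G1 (\<lambda>\<omega>. 1) \<omega> - real_cond_exp M G1 X \<omega>"
      by (rule G1.real_cond_exp_diff[OF integrable_const intX])
    moreover have "AE \<omega> in M. real_cond_exp M G1 (\<lambda>\<omega>. 1) \<omega> = 1"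
      by (rule G1.real_cond_exp_F_meas[OF integrable_const]) simp
    ultimately show ?thesis using eps' by eventually_elim simp
  qed
  define w where "w = (\<lambda>\<omega>. zeta0 (V \<omega>) (U \<omega>) + zeta (V \<omega>) (U \<omega>) * R \<omega>)"
  define b where "b = (\<lambda>\<omega>. beta (V \<omega>) (R \<omega>))"
  define ep where "ep = (\<lambda>\<omega>. eps (R \<omega>) (V \<omega>) (U \<omega>))"
  define m where "m = (\<lambda>\<omega>. w \<omega> + b \<omega> * X \<omega>)"
  have wG1[measurable]: "w \<in> borel_measurable G1" unfolding w_def by measurable
  have bG1[measurable]: "b \<in> borel_measurable G1" unfolding b_def by measurable
  have epG1[measurable]: "ep \<in> borel_measurable G1" unfolding ep_def by measurable
  have wH[measurable]: "w \<in> borel_measurable G2" unfolding w_def by measurable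
  have bH[measurable]: "b \<in> borel_measurable G2" unfolding b_def by measurable
  have mG2[measurable]: "m \<in> borel_measurable G2" unfolding m_def w_def b_def by measurable
  have [measurable]: "w \<in> borel_measurable M" "b \<in> borel_measurable M" "ep \<in> borel_measurable M" "m \<in> borel_measurable M"
    unfolding w_def b_def ep_def m_def by measurable
  have bH[measurable]: "b \<in> borel_measurable H" unfolding b_def by measurable
  have model'': "AE \<omega> in M. real_cond_exp M G2 Y \<omega> = m \<omega>"
    using model' unfolding m_def w_def b_def .
  have eps'': "AE \<omega> in M. real_cond_exp M G1 X \<omega> = ep \<omega>" using eps' unfolding ep_def .
  have E1X': "AE \<omega> in M. real_cond_exp M G1 (\<lambda>\<omega>. 1 - X \<omega>) \<omega> = 1 - ep \<omega>" using E1X unfolding ep_def .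
  have ep01: "AE \<omega> in M. 0 < ep \<omega> \<and> ep \<omega> < 1" using Xpos unfolding ep_def .
  have intw: "integrable M w" using int_z unfolding w_def .
  have epb1: "AE \<omega> in M. \<bar>ep \<omega>\<bar> \<le> 1" using ep01 by eventually_elim auto
  have epb2: "AE \<omega> in M. \<bar>1 - ep \<omega>\<bar> \<le> 1" using ep01 by eventually_elim auto
  have epbA1: "AE \<omega> in M. \<bar>indicator A \<omega> * ep \<omega>\<bar> \<le> 1" for A using ep01 by eventually_elim (auto simp: indicator_def)
  have epbA2: "AE \<omega> in M. \<bar>indicator A \<omega> * (1 - ep \<omega>)\<bar> \<le> 1" for A using ep01 by eventually_elim (auto simp: indicator_def)
  have intm: "integrable M m"
    using G2.real_cond_exp_int(1)[OF intY] by (rule integrable_cong_AE_imp) (use model'' in \<open>auto elim!: eventually_mono\<close>)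
  have intbX: "integrable M (\<lambda>\<omega>. b \<omega> * X \<omega>)"
  proof -
    have "integrable M (\<lambda>\<omega>. m \<omega> - w \<omega>)" using intm intw by auto
    then show ?thesis by (simp add: m_def)
  qed
  have intwX: "integrable M (\<lambda>\<omega>. \<bar>w \<omega>\<bar> + \<bar>b \<omega> * X \<omega>\<bar>)" using intw intbX by auto
  have c1eq: "AE \<omega> in M. real_cond_exp M G1 Y1 \<omega> = w \<omega> + b \<omega>"
  proof -
    define c1 where "c1 = real_cond_exp M G1 Y1"
    have [measurable]: "c1 \<in> borel_measurable G1" "c1 \<in> borel_measurable M" unfolding c1_def by auto
    have intc1: "integrable M c1" unfolding c1_def by (rule G1.real_cond_exp_int(1)[OF intY1])
    have ci1: "cond_indep_on M (\<lambda>_. True) borel X borel Y1 (MV \<Otimes>\<^sub>M MU \<Otimes>\<^sub>M borel) (\<lambda>\<omega>. (V \<omega>, U \<omega>, R \<omega>))"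
      by (rule ci_swap[OF A1_1])
    have p1: "AE \<omega> in M. real_cond_exp M G1 (indicator {x\<in>space M. X x \<in> {1}}) \<omega> = ep \<omega>"
    proof -
      have "AE \<omega> in M. real_cond_exp M G1 (indicator {x\<in>space M. X x \<in> {1}}) \<omega> = real_cond_exp M G1 X \<omega>"
        by (rule G1.real_cond_exp_cong) (use X01 in \<open>auto intro!: AE_I2 simp: indicator_def\<close>)
      then show ?thesis using eps'' by eventually_elim simp
    qed
    have seq: "(\<integral>\<omega>. indicator A \<omega> * (ep \<omega> * c1 \<omega>) \<partial>M) = (\<integral>\<omega>. indicator A \<omega> * (ep \<omega> * (w \<omega> + b \<omega>)) \<partial>M)"
      if AG1: "A \<in> sets G1" for A
    proof -
      have [measurable]: "A \<in> sets M" using setsG[OF AG1 G1.subalg] .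
      have [measurable]: "A \<in> sets G2" using setsS[OF AG1 sub21] .
      have "(\<integral>\<omega>. indicator A \<omega> * (ep \<omega> * c1 \<omega>) \<partial>M) = (\<integral>\<omega>. (indicator A \<omega> * ep \<omega>) * real_cond_exp M G1 Y1 \<omega> \<partial>M)"
        by (simp add: c1_def mult.assoc)
      also have "\<dots> = (\<integral>\<omega>. (indicator A \<omega> * ep \<omega>) * Y1 \<omega> \<partial>M)"
      proof (rule G1.real_cond_exp_intg(2))
        show "integrable M (\<lambda>\<omega>. indicator A \<omega> * ep \<omega> * Y1 \<omega>)"
          by (rule ib2[OF intY1 _ epbA1]) auto
      qed (use AG1 in auto)
      also have "\<dots> = (\<integral>\<omega>. indicator A \<omega> * real_cond_exp M G1 (indicator {x\<in>space M. X x \<in> {1}}) \<omega> * snd ((V \<omega>, U \<omega>, R \<omega>), Y1 \<omega>) \<partial>M)"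
        by (rule integral_cong_AE) (use p1 in \<open>auto elim!: eventually_mono\<close>)
      also have "\<dots> = (\<integral>\<omega>. indicator A \<omega> * indicator {x\<in>space M. X x \<in> {1}} \<omega> * snd ((V \<omega>, U \<omega>, R \<omega>), Y1 \<omega>) \<partial>M)"
        using CI_core[OF P ci1 mX _ mVUR, of "{1}" A snd] AG1 unfolding G1_def cexp_def by auto
      also have "\<dots> = (\<integral>\<omega>. (indicator A \<omega> * X \<omega>) * Y \<omega> \<partial>M)"
        by (rule Bochner_Integration.integral_cong) (use X01 consist in \<open>auto simp: indicator_def\<close>)
      also have "\<dots> = (\<integral>\<omega>. (indicator A \<omega> * X \<omega>) * real_cond_exp M G2 Y \<omega> \<partial>M)"
      proof (rule G2.real_cond_exp_intg(2)[symmetric])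
        show "integrable M (\<lambda>\<omega>. indicator A \<omega> * X \<omega> * Y \<omega>)"
          by (rule ib[OF intY]) (use X01 in \<open>auto intro!: AE_I2 simp: indicator_def\<close>)
      qed auto
      also have "\<dots> = (\<integral>\<omega>. (indicator A \<omega> * (w \<omega> + b \<omega>)) * X \<omega> \<partial>M)"
        by (rule integral_cong_AE2[OF _ _ model'']) (use X01 in \<open>auto simp: m_def indicator_def algebra_simps\<close>)
      also have "\<dots> = (\<integral>\<omega>. (indicator A \<omega> * (w \<omega> + b \<omega>)) * real_cond_exp M G1 X \<omega> \<partial>M)"
      proof (rule G1.real_cond_exp_intg(2)[symmetric])
        show "integrable M (\<lambda>\<omega>. indicator A \<omega> * (w \<omega> + b \<omega>) * X \<omega>)"
          by (rule ib[OF intwX]) (use X01 in \<open>auto intro!: AE_I2 simp: indicator_def abs_mult algebra_simps\<close>)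
      qed (use AG1 in auto)
      also have "\<dots> = (\<integral>\<omega>. indicator A \<omega> * (ep \<omega> * (w \<omega> + b \<omega>)) \<partial>M)"
        by (rule integral_cong_AE) (use eps'' in \<open>auto elim!: eventually_mono\<close>)
      finally show ?thesis .
    qed
    have i1: "integrable M (\<lambda>\<omega>. ep \<omega> * c1 \<omega>)"
      by (rule ib2[OF intc1 _ epb1]) auto
    have i2: "integrable M (\<lambda>\<omega>. ep \<omega> * (w \<omega> + b \<omega>))"
    proof -
      have "integrable M (\<lambda>\<omega>. (w \<omega> + b \<omega>) * real_cond_exp M G1 X \<omega>)"
      proof (rule G1.real_cond_exp_intg(1))
        show "integrable M (\<lambda>\<omega>. (w \<omega> + b \<omega>) * X \<omega>)"
          by (rule ib[OF intwX]) (use X01 in \<open>auto intro!: AE_I2 simp: abs_mult algebra_simps\<close>)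
      qed auto
      then show ?thesis by (rule integrable_cong_AE_imp) (use eps'' in \<open>auto elim!: eventually_mono\<close>)
    qed
    have "AE \<omega> in M. ep \<omega> * c1 \<omega> = ep \<omega> * (w \<omega> + b \<omega>)"
      by (rule ae_eq_from_sets[OF G1.sigma_finite_subalgebra_axioms _ _ i1 i2 seq]) auto
    then show ?thesis using ep01 unfolding c1_def by eventually_elim auto
  qed
  have c0eq: "AE \<omega> in M. real_cond_exp M G1 Y0 \<omega> = w \<omega>"
  proof -
    define c0 where "c0 = real_cond_exp M G1 Y0"
    have [measurable]: "c0 \<in> borel_measurable G1" "c0 \<in> borel_measurable M" unfolding c0_def by auto
    have intc0: "integrable M c0" unfolding c0_def by (rule G1.real_cond_exp_int(1)[OF intY0])
    have ci0: "cond_indep_on M (\<lambda>_. True) borel X borel Y0 (MV \<Otimes>\<^sub>M MU \<Otimes>\<^sub>M borel) (\<lambda>\<omega>. (V \<omega>, U \<omega>, R \<omega>))"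
      by (rule ci_swap[OF A1_0])
    have p0: "AE \<omega> in M. real_cond_exp M G1 (indicator {x\<in>space M. X x \<in> {0}}) \<omega> = 1 - ep \<omega>"
    proof -
      have "AE \<omega> in M. real_cond_exp M G1 (indicator {x\<in>space M. X x \<in> {0}}) \<omega> = real_cond_exp M G1 (\<lambda>\<omega>. 1 - X \<omega>) \<omega>"
        by (rule G1.real_cond_exp_cong) (use X01 in \<open>auto intro!: AE_I2 simp: indicator_def\<close>)
      then show ?thesis using E1X' by eventually_elim simp
    qed
    have seq: "(\<integral>\<omega>. indicator A \<omega> * ((1 - ep \<omega>) * c0 \<omega>) \<partial>M) = (\<integral>\<omega>. indicator A \<omega> * ((1 - ep \<omega>) * w \<omega>) \<partial>M)"
      if AG1: "A \<in> sets G1" for A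
    proof -
      have [measurable]: "A \<in> sets M" using setsG[OF AG1 G1.subalg] .
      have [measurable]: "A \<in> sets G2" using setsS[OF AG1 sub21] .
      have "(\<integral>\<omega>. indicator A \<omega> * ((1 - ep \<omega>) * c0 \<omega>) \<partial>M) = (\<integral>\<omega>. (indicator A \<omega> * (1 - ep \<omega>)) * real_cond_exp M G1 Y0 \<omega> \<partial>M)"
        by (simp add: c0_def mult.assoc)
      also have "\<dots> = (\<integral>\<omega>. (indicator A \<omega> * (1 - ep \<omega>)) * Y0 \<omega> \<partial>M)"
      proof (rule G1.real_cond_exp_intg(2))
        show "integrable M (\<lambda>\<omega>. indicator A \<omega> * (1 - ep \<omega>) * Y0 \<omega>)"
          by (rule ib2[OF intY0 _ epbA2]) auto
      qed (use AG1 in auto)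
      also have "\<dots> = (\<integral>\<omega>. indicator A \<omega> * real_cond_exp M G1 (indicator {x\<in>space M. X x \<in> {0}}) \<omega> * snd ((V \<omega>, U \<omega>, R \<omega>), Y0 \<omega>) \<partial>M)"
        by (rule integral_cong_AE) (use p0 in \<open>auto elim!: eventually_mono\<close>)
      also have "\<dots> = (\<integral>\<omega>. indicator A \<omega> * indicator {x\<in>space M. X x \<in> {0}} \<omega> * snd ((V \<omega>, U \<omega>, R \<omega>), Y0 \<omega>) \<partial>M)"
        using CI_core[OF P ci0 mX _ mVUR, of "{0}" A snd] AG1 unfolding G1_def cexp_def by auto
      also have "\<dots> = (\<integral>\<omega>. (indicator A \<omega> * (1 - X \<omega>)) * Y \<omega> \<partial>M)"
        by (rule Bochner_Integration.integral_cong) (use X01 consist in \<open>auto simp: indicator_def\<close>)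
      also have "\<dots> = (\<integral>\<omega>. (indicator A \<omega> * (1 - X \<omega>)) * real_cond_exp M G2 Y \<omega> \<partial>M)"
      proof (rule G2.real_cond_exp_intg(2)[symmetric])
        show "integrable M (\<lambda>\<omega>. indicator A \<omega> * (1 - X \<omega>) * Y \<omega>)"
          by (rule ib[OF intY]) (use X01 in \<open>auto intro!: AE_I2 simp: indicator_def\<close>)
      qed auto
      also have "\<dots> = (\<integral>\<omega>. (indicator A \<omega> * w \<omega>) * (1 - X \<omega>) \<partial>M)"
        by (rule integral_cong_AE2[OF _ _ model'']) (use X01 in \<open>auto simp: m_def indicator_def algebra_simps\<close>)
      also have "\<dots> = (\<integral>\<omega>. (indicator A \<omega> * w \<omega>) * real_cond_exp M G1 (\<lambda>\<omega>. 1 - X \<omega>) \<omega> \<partial>M)"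
      proof (rule G1.real_cond_exp_intg(2)[symmetric])
        show "integrable M (\<lambda>\<omega>. indicator A \<omega> * w \<omega> * (1 - X \<omega>))"
          by (rule ib[OF intw]) (use X01 in \<open>auto intro!: AE_I2 simp: indicator_def abs_mult\<close>)
      qed (use AG1 in auto)
      also have "\<dots> = (\<integral>\<omega>. indicator A \<omega> * ((1 - ep \<omega>) * w \<omega>) \<partial>M)"
        by (rule integral_cong_AE) (use E1X' in \<open>auto elim!: eventually_mono\<close>)
      finally show ?thesis .
    qed
    have i1: "integrable M (\<lambda>\<omega>. (1 - ep \<omega>) * c0 \<omega>)"
      by (rule ib2[OF intc0 _ epb2]) auto
    have i2: "integrable M (\<lambda>\<omega>. (1 - ep \<omega>) * w \<omega>)"
      by (rule ib2[OF intw _ epb2]) auto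
    have "AE \<omega> in M. (1 - ep \<omega>) * c0 \<omega> = (1 - ep \<omega>) * w \<omega>"
      by (rule ae_eq_from_sets[OF G1.sigma_finite_subalgebra_axioms _ _ i1 i2 seq]) auto
    then show ?thesis using ep01 unfolding c0_def by eventually_elim auto
  qed
  have intY10: "integrable M (\<lambda>\<omega>. Y1 \<omega> - Y0 \<omega>)" using intY1 intY0 by auto
  have Tdiff: "AE \<omega> in M. real_cond_exp M G1 (\<lambda>\<omega>. Y1 \<omega> - Y0 \<omega>) \<omega> = b \<omega>"
    using G1.real_cond_exp_diff[OF intY1 intY0] c1eq c0eq by eventually_elim simp
  have Tint1: "integrable M (\<lambda>\<omega>. (1 - R \<omega>) * (Y1 \<omega> - Y0 \<omega>))"
    by (rule ib[OF intY10]) (use R01 in \<open>auto intro!: AE_I2 simp: abs_mult\<close>)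
  have T_eq: "(\<integral>\<omega>. (1 - R \<omega>) * (Y1 \<omega> - Y0 \<omega>) \<partial>M) = (\<integral>\<omega>. (1 - R \<omega>) * beta (V \<omega>) 0 \<partial>M)"
  proof -
    have "(\<integral>\<omega>. (1 - R \<omega>) * (Y1 \<omega> - Y0 \<omega>) \<partial>M) = (\<integral>\<omega>. (1 - R \<omega>) * real_cond_exp M G1 (\<lambda>\<omega>. Y1 \<omega> - Y0 \<omega>) \<omega> \<partial>M)"
      by (rule G1.real_cond_exp_intg(2)[symmetric]) (auto simp: Tint1)
    also have "\<dots> = (\<integral>\<omega>. (1 - R \<omega>) * beta (V \<omega>) 0 \<partial>M)"
      by (rule integral_cong_AE2[OF _ _ Tdiff]) (use R01 in \<open>auto simp: b_def\<close>)
    finally show ?thesis .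
  qed
  have T_int: "integrable M (\<lambda>\<omega>. (1 - R \<omega>) * beta (V \<omega>) 0)"
  proof -
    have "integrable M (\<lambda>\<omega>. (1 - R \<omega>) * real_cond_exp M G1 (\<lambda>\<omega>. Y1 \<omega> - Y0 \<omega>) \<omega>)"
      by (rule G1.real_cond_exp_intg(1)) (auto simp: Tint1)
    then show ?thesis by (rule integrable_cong_AE2[OF _ _ Tdiff]) (use R01 in \<open>auto simp: b_def\<close>)
  qed
  define muR where "muR = (\<lambda>\<omega>. mu (V \<omega>) (R \<omega>))"
  define eta where "eta = (\<lambda>\<omega>. X \<omega> - muR \<omega>)"
  have muRH[measurable]: "muR \<in> borel_measurable H" unfolding muR_def by measurable
  have muRM[measurable]: "muR \<in> borel_measurable M" unfolding muR_def by measurable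
  have etaG2[measurable]: "eta \<in> borel_measurable G2" unfolding eta_def muR_def by measurable
  have etaM[measurable]: "eta \<in> borel_measurable M" unfolding eta_def muR_def by measurable
  have mu01': "AE \<omega> in M. 0 \<le> muR \<omega> \<and> muR \<omega> \<le> 1" using mu01 unfolding muR_def .
  have mub: "AE \<omega> in M. \<bar>muR \<omega>\<bar> \<le> 1" using mu01' by eventually_elim auto
  have mub2: "AE \<omega> in M. \<bar>1 - muR \<omega>\<bar> \<le> 1" using mu01' by eventually_elim auto
  have etab: "AE \<omega> in M. \<bar>eta \<omega>\<bar> \<le> 1" using mu01' AE_space
    by eventually_elim (use X01 in \<open>auto simp: eta_def\<close>)
  have Xb: "AE \<omega> in M. \<bar>X \<omega>\<bar> \<le> 1" using X01 by (auto intro!: AE_I2)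
  have int_etaY: "integrable M (\<lambda>\<omega>. eta \<omega> * Y \<omega>)" by (rule ib2[OF intY _ etab]) auto
  have mu'': "AE \<omega> in M. real_cond_exp M H X \<omega> = muR \<omega>" using mu' unfolding muR_def .
  have cz'': "AE \<omega> in M. real_cond_exp M H w \<omega> = cz (V \<omega>) (R \<omega>)" using cz' unfolding w_def .
  have cp'': "AE \<omega> in M. real_cond_exp M H (\<lambda>\<omega>. ep \<omega> * w \<omega>) \<omega> = cp (V \<omega>) (R \<omega>)" using cp' unfolding w_def ep_def .
  have ce'': "AE \<omega> in M. real_cond_exp M H ep \<omega> = ce (V \<omega>) (R \<omega>)" using ce' unfolding ep_def .
  have h2: "AE \<omega> in M. real_cond_exp M G2 (\<lambda>\<omega>. eta \<omega> * Y \<omega>) \<omega> = eta \<omega> * m \<omega>"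
  proof -
    have "AE \<omega> in M. real_cond_exp M G2 (\<lambda>\<omega>. eta \<omega> * Y \<omega>) \<omega> = eta \<omega> * real_cond_exp M G2 Y \<omega>"
      by (rule G2.real_cond_exp_mult) (auto simp: int_etaY)
    then show ?thesis using model'' by eventually_elim simp
  qed
  define f1 where "f1 = (\<lambda>\<omega>. w \<omega> * X \<omega>)"
  define f2 where "f2 = (\<lambda>\<omega>. muR \<omega> * w \<omega>)"
  define f3 where "f3 = (\<lambda>\<omega>. (1 - muR \<omega>) * b \<omega> * X \<omega>)"
  have [measurable]: "f1 \<in> borel_measurable M" "f2 \<in> borel_measurable M" "f3 \<in> borel_measurable M"
    unfolding f1_def f2_def f3_def by measurable
  have if1: "integrable M f1" unfolding f1_def by (rule ib2[OF intw _ Xb]) auto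
  have if2: "integrable M f2" unfolding f2_def by (rule ib2[OF intw _ mub]) auto
  have if3: "integrable M f3" unfolding f3_def by (rule ib2[OF intbX _ mub2]) auto
  have h3: "AE \<omega> in M. real_cond_exp M H (\<lambda>\<omega>. eta \<omega> * Y \<omega>) \<omega> = real_cond_exp M H (\<lambda>\<omega>. f1 \<omega> - f2 \<omega> + f3 \<omega>) \<omega>"
  proof -
    have a: "AE \<omega> in M. real_cond_exp M H (real_cond_exp M G2 (\<lambda>\<omega>. eta \<omega> * Y \<omega>)) \<omega> = real_cond_exp M H (\<lambda>\<omega>. eta \<omega> * Y \<omega>) \<omega>"
      by (rule H.real_cond_exp_nested_subalg[OF G2.subalg sub2H int_etaY])
    have b: "AE \<omega> in M. real_cond_exp M H (real_cond_exp M G2 (\<lambda>\<omega>. eta \<omega> * Y \<omega>)) \<omega> = real_cond_exp M H (\<lambda>\<omega>. f1 \<omega> - f2 \<omega> + f3 \<omega>) \<omega>"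
    proof (rule H.real_cond_exp_cong)
      show "AE \<omega> in M. real_cond_exp M G2 (\<lambda>\<omega>. eta \<omega> * Y \<omega>) \<omega> = f1 \<omega> - f2 \<omega> + f3 \<omega>"
        using h2 AE_space
      proof eventually_elim
        case (elim \<omega>)
        then have "X \<omega> = 0 \<or> X \<omega> = 1" using X01 by auto
        then have "eta \<omega> * m \<omega> = f1 \<omega> - f2 \<omega> + f3 \<omega>"
          by (auto simp: eta_def m_def f1_def f2_def f3_def algebra_simps)
        then show ?case using elim(1) by simp
      qed
    qed auto
    show ?thesis using a b by eventually_elim simp
  qed
  have h4: "AE \<omega> in M. real_cond_exp M H (\<lambda>\<omega>. f1 \<omega> - f2 \<omega> + f3 \<omega>) \<omega> =
      real_cond_exp M H f1 \<omega> - real_cond_exp M H f2 \<omega> + real_cond_exp M H f3 \<omega>"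
  proof -
    have "AE \<omega> in M. real_cond_exp M H (\<lambda>\<omega>. (f1 \<omega> - f2 \<omega>) + f3 \<omega>) \<omega> =
      real_cond_exp M H (\<lambda>\<omega>. f1 \<omega> - f2 \<omega>) \<omega> + real_cond_exp M H f3 \<omega>"
      by (rule H.real_cond_exp_add) (auto simp: if1 if2 if3)
    then show ?thesis using H.real_cond_exp_diff[OF if1 if2] by eventually_elim simp
  qed
  have h5: "AE \<omega> in M. real_cond_exp M H f1 \<omega> = cp (V \<omega>) (R \<omega>)"
  proof -
    have a: "AE \<omega> in M. real_cond_exp M G1 f1 \<omega> = w \<omega> * ep \<omega>"
    proof -
      have "AE \<omega> in M. real_cond_exp M G1 (\<lambda>\<omega>. w \<omega> * X \<omega>) \<omega> = w \<omega> * real_cond_exp M G1 X \<omega>"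
        by (rule G1.real_cond_exp_mult) (use if1 in \<open>auto simp: f1_def\<close>)
      then show ?thesis using eps'' unfolding f1_def by eventually_elim simp
    qed
    have b: "AE \<omega> in M. real_cond_exp M H (real_cond_exp M G1 f1) \<omega> = real_cond_exp M H f1 \<omega>"
      by (rule H.real_cond_exp_nested_subalg[OF G1.subalg sub1H if1])
    have c: "AE \<omega> in M. real_cond_exp M H (real_cond_exp M G1 f1) \<omega> = real_cond_exp M H (\<lambda>\<omega>. ep \<omega> * w \<omega>) \<omega>"
      by (rule H.real_cond_exp_cong) (use a in \<open>auto elim!: eventually_mono\<close>)
    show ?thesis using b c cp'' by eventually_elim simp
  qed
  have h6: "AE \<omega> in M. real_cond_exp M H f2 \<omega> = muR \<omega> * cz (V \<omega>) (R \<omega>)"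
  proof -
    have "AE \<omega> in M. real_cond_exp M H (\<lambda>\<omega>. muR \<omega> * w \<omega>) \<omega> = muR \<omega> * real_cond_exp M H w \<omega>"
      by (rule H.real_cond_exp_mult) (use if2 in \<open>auto simp: f2_def\<close>)
    then show ?thesis using cz'' unfolding f2_def by eventually_elim simp
  qed
  have h7: "AE \<omega> in M. real_cond_exp M H f3 \<omega> = (1 - muR \<omega>) * b \<omega> * muR \<omega>"
  proof -
    have "AE \<omega> in M. real_cond_exp M H (\<lambda>\<omega>. (1 - muR \<omega>) * b \<omega> * X \<omega>) \<omega> = (1 - muR \<omega>) * b \<omega> * real_cond_exp M H X \<omega>"
      by (rule H.real_cond_exp_mult) (use if3 in \<open>auto simp: f3_def\<close>)
    then show ?thesis using mu'' unfolding f3_def by eventually_elim simp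
  qed
  have h8: "AE \<omega> in M. ce (V \<omega>) (R \<omega>) = muR \<omega>"
  proof -
    have a: "AE \<omega> in M. real_cond_exp M H (real_cond_exp M G1 X) \<omega> = real_cond_exp M H X \<omega>"
      by (rule H.real_cond_exp_nested_subalg[OF G1.subalg sub1H intX])
    have b: "AE \<omega> in M. real_cond_exp M H (real_cond_exp M G1 X) \<omega> = real_cond_exp M H ep \<omega>"
      by (rule H.real_cond_exp_cong) (use eps'' in \<open>auto elim!: eventually_mono\<close>)
    show ?thesis using a b ce'' mu'' by eventually_elim simp
  qed
  define psi where "psi = (\<lambda>v r. (cp v r - ce v r * cz v r) + beta v r * sig2 mu v r)"
  have HI: "AE \<omega> in M. real_cond_exp M H (\<lambda>\<omega>. eta \<omega> * Y \<omega>) \<omega> = psi (V \<omega>) (R \<omega>)"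
    using h3 h4 h5 h6 h7 h8
    by eventually_elim (simp add: psi_def sig2_def b_def muR_def algebra_simps)
  have spH: "space H = space M" unfolding H_def gen_def by simp
  have spK: "space K = space M" unfolding K_def gen_def by simp
  have spG2: "space G2 = space M" unfolding G2_def gen_def by simp
  define R1 where "R1 = {\<omega>\<in>space M. R \<omega> = 1}"
  have R1H: "R1 \<in> sets H"
  proof -
    have "{\<omega>\<in>space M. (V \<omega>, R \<omega>) \<in> space MV \<times> {1}} \<in> sets H"
      unfolding H_def by (rule gen_set[OF mVR]) simp
    moreover have "{\<omega>\<in>space M. (V \<omega>, R \<omega>) \<in> space MV \<times> {1}} = R1"
      unfolding R1_def using measurable_space[OF mV] by auto
    ultimately show ?thesis by simp
  qed
  have R1sp: "R1 \<subseteq> space M" unfolding R1_def by auto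
  have Zpos': "AE \<omega> in M. R \<omega> = 1 \<longrightarrow>
      0 < real_cond_exp M H (indicator {x\<in>space M. Z x = 1}) \<omega> \<and> real_cond_exp M H (indicator {x\<in>space M. Z x = 1}) \<omega> < 1"
    using Zpos unfolding cexp_def H_def .
  have Wz: "AE \<omega> in M. R \<omega> = 1 \<longrightarrow> gY z (V \<omega>) - cz (V \<omega>) 1 - beta (V \<omega>) 1 * gX z (V \<omega>) = 0"
    if z01: "z = 0 \<or> z = 1" for z
  proof -
    define D where "D = (indicator {x\<in>space M. Z x \<in> {z}} :: 'a \<Rightarrow> real)"
    have DK[measurable]: "D \<in> borel_measurable K"
    proof -
      have "{x\<in>space K. Z x \<in> {z}} \<in> sets K" by measurable
      then show ?thesis unfolding D_def spK by simp
    qed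
    have DM[measurable]: "D \<in> borel_measurable M" unfolding D_def by simp
    have intD: "integrable M D" unfolding D_def
      by (rule integrable_real_indicator) (auto simp: less_top[symmetric])
    define p where "p = real_cond_exp M H D"
    define qq where "qq = real_cond_exp M G2 D"
    have [measurable]: "p \<in> borel_measurable H" "p \<in> borel_measurable M" unfolding p_def by auto
    have [measurable]: "qq \<in> borel_measurable G2" "qq \<in> borel_measurable M" unfolding qq_def by auto
    have pb: "AE \<omega> in M. 0 \<le> p \<omega> \<and> p \<omega> \<le> 1"
    proof -
      have "AE \<omega> in M. 0 \<le> p \<omega>" unfolding p_def
        by (rule H.real_cond_exp_ge_c[OF intD]) (auto simp: D_def)
      moreover have "AE \<omega> in M. p \<omega> \<le> 1" unfolding p_def
        by (rule H.real_cond_exp_le_c[OF intD]) (auto simp: D_def)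
      ultimately show ?thesis by eventually_elim simp
    qed
    have qb: "AE \<omega> in M. 0 \<le> qq \<omega> \<and> qq \<omega> \<le> 1"
    proof -
      have "AE \<omega> in M. 0 \<le> qq \<omega>" unfolding qq_def
        by (rule G2.real_cond_exp_ge_c[OF intD]) (auto simp: D_def)
      moreover have "AE \<omega> in M. qq \<omega> \<le> 1" unfolding qq_def
        by (rule G2.real_cond_exp_le_c[OF intD]) (auto simp: D_def)
      ultimately show ?thesis by eventually_elim simp
    qed
    have ppos: "AE \<omega> in M. R \<omega> = 1 \<longrightarrow> 0 < p \<omega>"
    proof (cases "z = 1")
      case True
      have "D = indicator {x\<in>space M. Z x = 1}" unfolding D_def True by simp
      then show ?thesis using Zpos' unfolding p_def by (auto elim!: eventually_mono)
    next
      case False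
      then have z0: "z = 0" using z01 by auto
      have intZ1: "integrable M (indicator {x\<in>space M. Z x = 1} :: 'a \<Rightarrow> real)"
        by (rule integrable_real_indicator) (auto simp: less_top[symmetric])
      have a: "AE \<omega> in M. p \<omega> = real_cond_exp M H (\<lambda>\<omega>. 1 - indicator {x\<in>space M. Z x = 1} \<omega>) \<omega>"
        unfolding p_def
        by (rule H.real_cond_exp_cong) (use Z01 in \<open>auto intro!: AE_I2 simp: D_def z0 indicator_def\<close>)
      have b: "AE \<omega> in M. real_cond_exp M H (\<lambda>\<omega>. 1 - indicator {x\<in>space M. Z x = 1} \<omega>) \<omega>
          = real_cond_exp M H (\<lambda>\<omega>. 1) \<omega> - real_cond_exp M H (indicator {x\<in>space M. Z x = 1}) \<omega>"
        by (rule H.real_cond_exp_diff[OF integrable_const intZ1])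
      have c: "AE \<omega> in M. real_cond_exp M H (\<lambda>\<omega>. 1) \<omega> = 1"
        by (rule H.real_cond_exp_F_meas[OF integrable_const]) simp
      show ?thesis using a b c Zpos' by eventually_elim auto
    qed
    have pb1: "AE \<omega> in M. \<bar>indicator A \<omega> * p \<omega>\<bar> \<le> 1" for A
      using pb by eventually_elim (auto simp: indicator_def)
    have qb1: "AE \<omega> in M. \<bar>indicator A \<omega> * qq \<omega>\<bar> \<le> 1" for A
      using qb by eventually_elim (auto simp: indicator_def)
    have Db1: "AE \<omega> in M. \<bar>indicator A \<omega> * D \<omega>\<bar> \<le> 1" for A
      by (rule AE_I2) (auto simp: indicator_def D_def)
    have chain: "(\<integral>\<omega>. indicator A0 \<omega> * p \<omega> * gY z (V \<omega>) \<partial>M)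
        = (\<integral>\<omega>. indicator A0 \<omega> * p \<omega> * cz (V \<omega>) (R \<omega>) \<partial>M) + (\<integral>\<omega>. indicator A0 \<omega> * p \<omega> * (beta (V \<omega>) 1 * gX z (V \<omega>)) \<partial>M)
        \<and> integrable M (\<lambda>\<omega>. indicator A0 \<omega> * p \<omega> * gY z (V \<omega>))
        \<and> integrable M (\<lambda>\<omega>. indicator A0 \<omega> * p \<omega> * cz (V \<omega>) (R \<omega>))
        \<and> integrable M (\<lambda>\<omega>. indicator A0 \<omega> * p \<omega> * (beta (V \<omega>) 1 * gX z (V \<omega>)))"
      if AH: "AH \<in> sets H" and A0def: "A0 = AH \<inter> R1" for AH A0
    proof -
      have A0H[measurable]: "A0 \<in> sets H" unfolding A0def using AH R1H by auto
      have A0M[measurable]: "A0 \<in> sets M" using setsG[OF A0H H.subalg] .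
      have A0K[measurable]: "A0 \<in> sets K" using setsS[OF A0H subKH] .
      have A0G2[measurable]: "A0 \<in> sets G2" using setsS[OF A0H sub2H] .
      have A0R: "\<omega> \<in> A0 \<Longrightarrow> R \<omega> = 1" for \<omega> unfolding A0def R1_def by auto
      have A0sp: "\<omega> \<in> A0 \<Longrightarrow> \<omega> \<in> space M" for \<omega> unfolding A0def R1_def by auto
      have a_eq: "AE \<omega> in M. indicator A0 \<omega> * D \<omega> * gY z (V \<omega>) = indicator A0 \<omega> * D \<omega> * real_cond_exp M K Y \<omega>"
        using gY' by eventually_elim (auto simp: indicator_def D_def dest: A0R)
      have a_int0: "integrable M (\<lambda>\<omega>. indicator A0 \<omega> * D \<omega> * Y \<omega>)"
        by (rule ib2[OF intY _ Db1]) auto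
      have a1: "(\<integral>\<omega>. indicator A0 \<omega> * D \<omega> * real_cond_exp M K Y \<omega> \<partial>M) = (\<integral>\<omega>. indicator A0 \<omega> * D \<omega> * Y \<omega> \<partial>M)"
        by (rule K.real_cond_exp_intg(2)) (auto simp: a_int0)
      have a_int: "integrable M (\<lambda>\<omega>. indicator A0 \<omega> * D \<omega> * gY z (V \<omega>))"
      proof -
        have "integrable M (\<lambda>\<omega>. indicator A0 \<omega> * D \<omega> * real_cond_exp M K Y \<omega>)"
          by (rule K.real_cond_exp_intg(1)) (auto simp: a_int0)
        then show ?thesis by (rule integrable_cong_AE_imp) (use a_eq in \<open>auto elim!: eventually_mono\<close>)
      qed
      have a: "(\<integral>\<omega>. indicator A0 \<omega> * D \<omega> * gY z (V \<omega>) \<partial>M) = (\<integral>\<omega>. indicator A0 \<omega> * D \<omega> * Y \<omega> \<partial>M)"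
        unfolding a1[symmetric] by (rule integral_cong_AE) (use a_eq in auto)
      have b: "(\<integral>\<omega>. indicator A0 \<omega> * D \<omega> * Y \<omega> \<partial>M) = (\<integral>\<omega>. indicator A0 \<omega> * qq \<omega> * Y \<omega> \<partial>M)"
        using CI_core[OF P A2_Y mZ mY mXVUR, of "{z}" A0 snd] A0G2 A0R
        unfolding G2_def cexp_def D_def qq_def by auto
      have c_int: "integrable M (\<lambda>\<omega>. indicator A0 \<omega> * qq \<omega> * Y \<omega>)"
        by (rule ib2[OF intY _ qb1]) auto
      have c: "(\<integral>\<omega>. indicator A0 \<omega> * qq \<omega> * Y \<omega> \<partial>M) = (\<integral>\<omega>. indicator A0 \<omega> * qq \<omega> * m \<omega> \<partial>M)"
      proof -
        have "(\<integral>\<omega>. indicator A0 \<omega> * qq \<omega> * Y \<omega> \<partial>M) = (\<integral>\<omega>. indicator A0 \<omega> * qq \<omega> * real_cond_exp M G2 Y \<omega> \<partial>M)"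
          by (rule G2.real_cond_exp_intg(2)[symmetric]) (auto simp: c_int)
        also have "\<dots> = (\<integral>\<omega>. indicator A0 \<omega> * qq \<omega> * m \<omega> \<partial>M)"
          by (rule integral_cong_AE) (use model'' in \<open>auto elim!: eventually_mono\<close>)
        finally show ?thesis .
      qed
      have d_int: "integrable M (\<lambda>\<omega>. indicator A0 \<omega> * m \<omega> * D \<omega>)"
        by (rule ib2[OF intm _ Db1[of A0]]) (auto simp: ac_simps)
      have d: "(\<integral>\<omega>. indicator A0 \<omega> * qq \<omega> * m \<omega> \<partial>M) = (\<integral>\<omega>. indicator A0 \<omega> * m \<omega> * D \<omega> \<partial>M)"
      proof -
        have "(\<integral>\<omega>. indicator A0 \<omega> * m \<omega> * real_cond_exp M G2 D \<omega> \<partial>M) = (\<integral>\<omega>. indicator A0 \<omega> * m \<omega> * D \<omega> \<partial>M)"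
          by (rule G2.real_cond_exp_intg(2)) (auto simp: d_int)
        then show ?thesis by (simp add: qq_def ac_simps)
      qed
      have e_int1: "integrable M (\<lambda>\<omega>. indicator A0 \<omega> * D \<omega> * w \<omega>)"
        by (rule ib2[OF intw _ Db1]) auto
      have e_int2: "integrable M (\<lambda>\<omega>. indicator A0 \<omega> * D \<omega> * beta (V \<omega>) 1 * X \<omega>)"
        by (rule ib2[OF intbX _ Db1[of A0]]) (auto simp: b_def indicator_def dest: A0R)
      have e: "(\<integral>\<omega>. indicator A0 \<omega> * m \<omega> * D \<omega> \<partial>M) = (\<integral>\<omega>. indicator A0 \<omega> * D \<omega> * w \<omega> \<partial>M)
           + (\<integral>\<omega>. indicator A0 \<omega> * D \<omega> * beta (V \<omega>) 1 * X \<omega> \<partial>M)"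
      proof -
        have "(\<integral>\<omega>. indicator A0 \<omega> * m \<omega> * D \<omega> \<partial>M) = (\<integral>\<omega>. indicator A0 \<omega> * D \<omega> * w \<omega> + indicator A0 \<omega> * D \<omega> * beta (V \<omega>) 1 * X \<omega> \<partial>M)"
          by (rule Bochner_Integration.integral_cong) (auto simp: m_def b_def indicator_def algebra_simps dest: A0R)
        also have "\<dots> = (\<integral>\<omega>. indicator A0 \<omega> * D \<omega> * w \<omega> \<partial>M) + (\<integral>\<omega>. indicator A0 \<omega> * D \<omega> * beta (V \<omega>) 1 * X \<omega> \<partial>M)"
          by (rule Bochner_Integration.integral_add[OF e_int1 e_int2])
        finally show ?thesis .
      qed
      have f_int: "integrable M (\<lambda>\<omega>. indicator A0 \<omega> * p \<omega> * w \<omega>)"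
        by (rule ib2[OF intw _ pb1]) auto
      have f: "(\<integral>\<omega>. indicator A0 \<omega> * D \<omega> * w \<omega> \<partial>M) = (\<integral>\<omega>. indicator A0 \<omega> * p \<omega> * cz (V \<omega>) (R \<omega>) \<partial>M)"
      proof -
        have phim: "(\<lambda>(c, u). zeta0 (fst c) u + zeta (fst c) u * snd c) \<in> (MV \<Otimes>\<^sub>M borel) \<Otimes>\<^sub>M MU \<rightarrow>\<^sub>M borel"
        proof -
          have 1: "(\<lambda>x. (fst (fst x), snd x)) \<in> (MV \<Otimes>\<^sub>M borel) \<Otimes>\<^sub>M MU \<rightarrow>\<^sub>M MV \<Otimes>\<^sub>M MU" by measurable
          have "(\<lambda>x. zeta0 (fst (fst x)) (snd x)) \<in> borel_measurable ((MV \<Otimes>\<^sub>M borel) \<Otimes>\<^sub>M MU)"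
            using measurable_compose[OF 1 mzeta0] by simp
          moreover have "(\<lambda>x. zeta (fst (fst x)) (snd x)) \<in> borel_measurable ((MV \<Otimes>\<^sub>M borel) \<Otimes>\<^sub>M MU)"
            using measurable_compose[OF 1 mzeta] by simp
          ultimately show ?thesis unfolding case_prod_beta by measurable
        qed
        have "(\<integral>\<omega>. indicator A0 \<omega> * D \<omega> * w \<omega> \<partial>M) = (\<integral>\<omega>. indicator A0 \<omega> * p \<omega> * w \<omega> \<partial>M)"
          using CI_core[OF P A2_U mZ mU mVR, of "{z}" A0 "\<lambda>(c, u). zeta0 (fst c) u + zeta (fst c) u * snd c"]
            A0H A0R phim
          unfolding H_def cexp_def D_def p_def w_def by auto
        also have "\<dots> = (\<integral>\<omega>. indicator A0 \<omega> * p \<omega> * real_cond_exp M H w \<omega> \<partial>M)"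
          by (rule H.real_cond_exp_intg(2)[symmetric]) (auto simp: f_int)
        also have "\<dots> = (\<integral>\<omega>. indicator A0 \<omega> * p \<omega> * cz (V \<omega>) (R \<omega>) \<partial>M)"
          by (rule integral_cong_AE) (use cz'' in \<open>auto elim!: eventually_mono\<close>)
        finally show ?thesis .
      qed
      have f_int2: "integrable M (\<lambda>\<omega>. indicator A0 \<omega> * p \<omega> * cz (V \<omega>) (R \<omega>))"
      proof -
        have "integrable M (\<lambda>\<omega>. indicator A0 \<omega> * p \<omega> * real_cond_exp M H w \<omega>)"
          by (rule H.real_cond_exp_intg(1)) (auto simp: f_int)
        then show ?thesis by (rule integrable_cong_AE_imp) (use cz'' in \<open>auto elim!: eventually_mono\<close>)
      qed
      have g_eq: "AE \<omega> in M. indicator A0 \<omega> * D \<omega> * beta (V \<omega>) 1 * real_cond_exp M K X \<omega> = indicator A0 \<omega> * D \<omega> * (beta (V \<omega>) 1 * gX z (V \<omega>))"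
        using gX' by eventually_elim (auto simp: indicator_def D_def dest: A0R)
      have g1: "(\<integral>\<omega>. indicator A0 \<omega> * D \<omega> * beta (V \<omega>) 1 * real_cond_exp M K X \<omega> \<partial>M) = (\<integral>\<omega>. indicator A0 \<omega> * D \<omega> * beta (V \<omega>) 1 * X \<omega> \<partial>M)"
        by (rule K.real_cond_exp_intg(2)) (auto simp: e_int2)
      have g_int: "integrable M (\<lambda>\<omega>. indicator A0 \<omega> * D \<omega> * (beta (V \<omega>) 1 * gX z (V \<omega>)))"
      proof -
        have "integrable M (\<lambda>\<omega>. indicator A0 \<omega> * D \<omega> * beta (V \<omega>) 1 * real_cond_exp M K X \<omega>)"
          by (rule K.real_cond_exp_intg(1)) (auto simp: e_int2)
        then show ?thesis by (rule integrable_cong_AE_imp) (use g_eq in \<open>auto elim!: eventually_mono\<close>)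
      qed
      have g: "(\<integral>\<omega>. indicator A0 \<omega> * D \<omega> * beta (V \<omega>) 1 * X \<omega> \<partial>M) = (\<integral>\<omega>. indicator A0 \<omega> * D \<omega> * (beta (V \<omega>) 1 * gX z (V \<omega>)) \<partial>M)"
        unfolding g1[symmetric] by (rule integral_cong_AE) (use g_eq in auto)
      have hgen: "(\<integral>\<omega>. indicator A0 \<omega> * D \<omega> * \<phi> \<omega> \<partial>M) = (\<integral>\<omega>. indicator A0 \<omega> * p \<omega> * \<phi> \<omega> \<partial>M)
          \<and> integrable M (\<lambda>\<omega>. indicator A0 \<omega> * p \<omega> * \<phi> \<omega>)"
        if phiH: "\<phi> \<in> borel_measurable H" and phii: "integrable M (\<lambda>\<omega>. indicator A0 \<omega> * D \<omega> * \<phi> \<omega>)" for \<phi>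
      proof -
        have [measurable]: "\<phi> \<in> borel_measurable H" by (rule phiH)
        have ii: "integrable M (\<lambda>\<omega>. (indicator A0 \<omega> * \<phi> \<omega>) * D \<omega>)"
          using phii by (simp add: ac_simps)
        have 1: "(\<integral>\<omega>. (indicator A0 \<omega> * \<phi> \<omega>) * real_cond_exp M H D \<omega> \<partial>M) = (\<integral>\<omega>. (indicator A0 \<omega> * \<phi> \<omega>) * D \<omega> \<partial>M)"
          by (rule H.real_cond_exp_intg(2)) (auto simp: ii)
        have 2: "integrable M (\<lambda>\<omega>. (indicator A0 \<omega> * \<phi> \<omega>) * real_cond_exp M H D \<omega>)"
          by (rule H.real_cond_exp_intg(1)) (auto simp: ii)
        show ?thesis using 1 2 by (simp add: p_def ac_simps)
      qed
      have mgYH: "(\<lambda>\<omega>. gY z (V \<omega>)) \<in> borel_measurable H" by measurable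
      have mbgH: "(\<lambda>\<omega>. beta (V \<omega>) 1 * gX z (V \<omega>)) \<in> borel_measurable H" by measurable
      note h1 = hgen[OF mgYH a_int]
      note h2 = hgen[OF mbgH g_int]
      show ?thesis using h1 h2 a b c d e f g f_int2 by simp
    qed
    have [measurable]: "R1 \<in> sets H" by (rule R1H)
    define Df where "Df = (\<lambda>\<omega>. indicator R1 \<omega> * p \<omega> * (gY z (V \<omega>) - cz (V \<omega>) (R \<omega>) - beta (V \<omega>) 1 * gX z (V \<omega>)))"
    have DfH[measurable]: "Df \<in> borel_measurable H" unfolding Df_def by measurable
    have DfM[measurable]: "Df \<in> borel_measurable M" by (rule measurable_from_subalg[OF H.subalg DfH])
    have Dfsplit: "indicator A \<omega> * Df \<omega> = indicator (A \<inter> R1) \<omega> * p \<omega> * gY z (V \<omega>)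
        - indicator (A \<inter> R1) \<omega> * p \<omega> * cz (V \<omega>) (R \<omega>) - indicator (A \<inter> R1) \<omega> * p \<omega> * (beta (V \<omega>) 1 * gX z (V \<omega>))" for A \<omega>
      by (simp add: Df_def indicator_inter_arith algebra_simps)
    have spHs: "space M \<in> sets H" using sets.top[of H] spH by simp
    have R1eq: "space M \<inter> R1 = R1" using R1sp by auto
    note ch0 = chain[OF spHs refl, unfolded R1eq]
    have intDf: "integrable M Df"
    proof -
      have "integrable M (\<lambda>\<omega>. indicator (space M \<inter> R1) \<omega> * p \<omega> * gY z (V \<omega>)
        - indicator (space M \<inter> R1) \<omega> * p \<omega> * cz (V \<omega>) (R \<omega>) - indicator (space M \<inter> R1) \<omega> * p \<omega> * (beta (V \<omega>) 1 * gX z (V \<omega>)))"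
        using ch0 unfolding R1eq by auto
      then show ?thesis
        by (rule integrable_cong_AE2[OF _ _ AE_I2[of M "\<lambda>_. True"]]) (auto simp: Dfsplit[of "space M", symmetric])
    qed
    have eqs: "(\<integral>\<omega>. indicator A \<omega> * Df \<omega> \<partial>M) = (\<integral>\<omega>. indicator A \<omega> * 0 \<partial>M)" if AH: "A \<in> sets H" for A
    proof -
      note ch = chain[OF AH refl]
      have "(\<integral>\<omega>. indicator A \<omega> * Df \<omega> \<partial>M) = (\<integral>\<omega>. indicator (A \<inter> R1) \<omega> * p \<omega> * gY z (V \<omega>)
        - indicator (A \<inter> R1) \<omega> * p \<omega> * cz (V \<omega>) (R \<omega>) - indicator (A \<inter> R1) \<omega> * p \<omega> * (beta (V \<omega>) 1 * gX z (V \<omega>)) \<partial>M)"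
        by (simp only: Dfsplit)
      also have "\<dots> = 0" using ch by simp
      finally show ?thesis by simp
    qed
    have "AE \<omega> in M. Df \<omega> = 0"
      by (rule ae_eq_from_sets[OF H.sigma_finite_subalgebra_axioms DfH _ intDf integrable_zero eqs]) auto
    then show ?thesis using ppos AE_space
      by eventually_elim (auto simp: Df_def R1_def)
  qed
  have W1: "AE \<omega> in M. R \<omega> = 1 \<longrightarrow> wald gY gX (V \<omega>) = beta (V \<omega>) 1"
    using Wz[of 0, OF disjI1[OF refl]] Wz[of 1, OF disjI2[OF refl]] relevance
  proof eventually_elim
    case (elim \<omega>)
    show ?case
    proof
      assume r: "R \<omega> = 1"
      then have ne: "gX 1 (V \<omega>) - gX 0 (V \<omega>) \<noteq> 0" using elim by simp
      have "gY 1 (V \<omega>) - gY 0 (V \<omega>) = beta (V \<omega>) 1 * (gX 1 (V \<omega>) - gX 0 (V \<omega>))"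
        using elim r by (simp add: algebra_simps)
      then show "wald gY gX (V \<omega>) = beta (V \<omega>) 1" unfolding wald_def using ne by simp
    qed
  qed
  have WaldAE: "AE \<omega> in M. wald gY gX (V \<omega>) = beta (V \<omega>) 1"
  proof (rule transfer_ae[OF P mV intR _ mom])
    show "AE x in M. 0 \<le> R x" using R01 by (auto intro!: AE_I2)
    show "AE x in M. real_cond_exp M (gen M MV V) R x = om (V x)" using om unfolding cexp_def .
    show "AE x in M. 0 < om (V x)" using overlap by eventually_elim simp
    have pv1: "(\<lambda>v. (v, 1::real)) \<in> MV \<rightarrow>\<^sub>M MV \<Otimes>\<^sub>M borel" by measurable
    have pzv: "(\<lambda>v. (z::real, v)) \<in> MV \<rightarrow>\<^sub>M borel \<Otimes>\<^sub>M MV" for z by measurable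
    have [measurable]: "(\<lambda>v. beta v 1) \<in> borel_measurable MV" using measurable_compose[OF pv1 mbeta] by simp
    have [measurable]: "(\<lambda>v. gY z v) \<in> borel_measurable MV" for z using measurable_compose[OF pzv mgY] by simp
    have [measurable]: "(\<lambda>v. gX z v) \<in> borel_measurable MV" for z using measurable_compose[OF pzv mgX] by simp
    have [measurable]: "(\<lambda>v. wald gY gX v) \<in> borel_measurable MV" unfolding wald_def by measurable
    show "{v \<in> space MV. wald gY gX v = beta v 1} \<in> sets MV" by measurable
    show "AE x in M. R x \<noteq> 0 \<longrightarrow> wald gY gX (V x) = beta (V x) 1"
      using W1 AE_space by eventually_elim (use R01 in auto)
  qed
  define hp where "hp = (\<lambda>\<omega>. (2 * R \<omega> - 1) / fRV om (R \<omega>) (V \<omega>) * (eta \<omega> * Y \<omega>))"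
  have [measurable]: "hp \<in> borel_measurable M" unfolding hp_def by measurable
  have hh: "h \<omega> = hp \<omega> / sig2 mu (V \<omega>) 0" for \<omega>
    by (simp add: h_def hp_def eta_def muR_def divide_inverse inverse_mult_distrib ac_simps)
  have hfun: "h = (\<lambda>\<omega>. hp \<omega> / sig2 mu (V \<omega>) 0)" by (auto simp: hh)
  have inthp: "integrable M hp"
  proof (rule ib[OF inth])
    show "AE \<omega> in M. \<bar>hp \<omega>\<bar> \<le> \<bar>h \<omega>\<bar>"
      using sig0pos
    proof eventually_elim
      case (elim \<omega>)
      have "sig2 mu (V \<omega>) 0 \<le> 1" using sig_le[of "mu (V \<omega>) 0"] by (simp add: sig2_def)
      then show ?case unfolding hh using abs_div_le[OF elim] by simp
    qed
  qed measurable
  define kf where "kf = (\<lambda>v r. (2 * r - 1) / fRV om r v * psi v r)"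
  have [measurable]: "(\<lambda>\<omega>. kf (V \<omega>) (R \<omega>)) \<in> borel_measurable M"
    "(\<lambda>\<omega>. kf (V \<omega>) 1) \<in> borel_measurable S" "(\<lambda>\<omega>. kf (V \<omega>) 0) \<in> borel_measurable S"
    "(\<lambda>\<omega>. kf (V \<omega>) 1) \<in> borel_measurable M" "(\<lambda>\<omega>. kf (V \<omega>) 0) \<in> borel_measurable M"
    unfolding kf_def psi_def by measurable
  have kH: "AE \<omega> in M. real_cond_exp M H hp \<omega> = kf (V \<omega>) (R \<omega>)"
  proof -
    have "AE \<omega> in M. real_cond_exp M H (\<lambda>\<omega>. (2 * R \<omega> - 1) / fRV om (R \<omega>) (V \<omega>) * (eta \<omega> * Y \<omega>)) \<omega>
       = (2 * R \<omega> - 1) / fRV om (R \<omega>) (V \<omega>) * real_cond_exp M H (\<lambda>\<omega>. eta \<omega> * Y \<omega>) \<omega>"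
      by (rule H.real_cond_exp_mult) (use inthp in \<open>auto simp: hp_def\<close>)
    then show ?thesis using HI unfolding hp_def kf_def by eventually_elim simp
  qed
  have intk: "integrable M (\<lambda>\<omega>. kf (V \<omega>) (R \<omega>))"
    by (rule integrable_cong_AE2[OF H.real_cond_exp_int(1)[OF inthp] _ kH]) auto
  have ES1: "AE \<omega> in M. real_cond_exp M S hp \<omega> = real_cond_exp M S (\<lambda>\<omega>. kf (V \<omega>) 1 * R \<omega> + kf (V \<omega>) 0 * (1 - R \<omega>)) \<omega>"
  proof -
    have a: "AE \<omega> in M. real_cond_exp M S (real_cond_exp M H hp) \<omega> = real_cond_exp M S hp \<omega>"
      by (rule S.real_cond_exp_nested_subalg[OF H.subalg subHS inthp])
    have b: "AE \<omega> in M. real_cond_exp M S (real_cond_exp M H hp) \<omega> = real_cond_exp M S (\<lambda>\<omega>. kf (V \<omega>) 1 * R \<omega> + kf (V \<omega>) 0 * (1 - R \<omega>)) \<omega>"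
    proof (rule S.real_cond_exp_cong)
      show "AE \<omega> in M. real_cond_exp M H hp \<omega> = kf (V \<omega>) 1 * R \<omega> + kf (V \<omega>) 0 * (1 - R \<omega>)"
        using kH AE_space
      proof eventually_elim
        case (elim \<omega>)
        then have "R \<omega> = 0 \<or> R \<omega> = 1" using R01 by auto
        then show ?case using elim(1) by auto
      qed
    qed auto
    show ?thesis using a b by eventually_elim simp
  qed
  have ik1: "integrable M (\<lambda>\<omega>. kf (V \<omega>) 1 * R \<omega>)"
  proof (rule ib[OF intk])
    show "AE \<omega> in M. \<bar>kf (V \<omega>) 1 * R \<omega>\<bar> \<le> \<bar>kf (V \<omega>) (R \<omega>)\<bar>"
      by (rule AE_I2) (use R01 in auto)
  qed measurable
  have ik0: "integrable M (\<lambda>\<omega>. kf (V \<omega>) 0 * (1 - R \<omega>))"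
  proof (rule ib[OF intk])
    show "AE \<omega> in M. \<bar>kf (V \<omega>) 0 * (1 - R \<omega>)\<bar> \<le> \<bar>kf (V \<omega>) (R \<omega>)\<bar>"
      by (rule AE_I2) (use R01 in auto)
  qed measurable
  have ES2: "AE \<omega> in M. real_cond_exp M S (\<lambda>\<omega>. kf (V \<omega>) 1 * R \<omega> + kf (V \<omega>) 0 * (1 - R \<omega>)) \<omega>
     = kf (V \<omega>) 1 * om (V \<omega>) + kf (V \<omega>) 0 * (1 - om (V \<omega>))"
  proof -
    have a: "AE \<omega> in M. real_cond_exp M S (\<lambda>\<omega>. kf (V \<omega>) 1 * R \<omega> + kf (V \<omega>) 0 * (1 - R \<omega>)) \<omega>
       = real_cond_exp M S (\<lambda>\<omega>. kf (V \<omega>) 1 * R \<omega>) \<omega> + real_cond_exp M S (\<lambda>\<omega>. kf (V \<omega>) 0 * (1 - R \<omega>)) \<omega>"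
      by (rule S.real_cond_exp_add[OF ik1 ik0])
    have b: "AE \<omega> in M. real_cond_exp M S (\<lambda>\<omega>. kf (V \<omega>) 1 * R \<omega>) \<omega> = kf (V \<omega>) 1 * real_cond_exp M S R \<omega>"
      by (rule S.real_cond_exp_mult) (auto simp: ik1)
    have c: "AE \<omega> in M. real_cond_exp M S (\<lambda>\<omega>. kf (V \<omega>) 0 * (1 - R \<omega>)) \<omega> = kf (V \<omega>) 0 * real_cond_exp M S (\<lambda>\<omega>. 1 - R \<omega>) \<omega>"
      by (rule S.real_cond_exp_mult) (auto simp: ik0)
    show ?thesis using a b c om' ERS by eventually_elim simp
  qed
  have EhS: "AE \<omega> in M. real_cond_exp M S h \<omega> = real_cond_exp M S hp \<omega> / sig2 mu (V \<omega>) 0"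
  proof -
    have a: "AE \<omega> in M. real_cond_exp M S (\<lambda>\<omega>. 1 / sig2 mu (V \<omega>) 0 * hp \<omega>) \<omega> = 1 / sig2 mu (V \<omega>) 0 * real_cond_exp M S hp \<omega>"
      by (rule S.real_cond_exp_mult) (use inth[unfolded hfun] in auto)
    have "(\<lambda>\<omega>. 1 / sig2 mu (V \<omega>) 0 * hp \<omega>) = h" by (auto simp: hh)
    then show ?thesis using a by simp
  qed
  have KF: "AE \<omega> in M. Gf (V \<omega>) = beta (V \<omega>) 0 + real_cond_exp M S h \<omega>"
    using EhS ES1 ES2 WaldAE sig0pos overlap
  proof eventually_elim
    case (elim \<omega>)
    let ?v = "V \<omega>"
    have s0: "sig2 mu ?v 0 \<noteq> 0" using elim by simp
    have o1: "om ?v \<noteq> 0" "1 - om ?v \<noteq> 0" using elim by auto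
    have "real_cond_exp M S h \<omega> = (kf ?v 1 * om ?v + kf ?v 0 * (1 - om ?v)) / sig2 mu ?v 0"
      using elim by simp
    also have "kf ?v 1 * om ?v + kf ?v 0 * (1 - om ?v) = psi ?v 1 - psi ?v 0"
      using o1 by (simp add: kf_def fRV_def)
    finally have e: "real_cond_exp M S h \<omega> = (psi ?v 1 - psi ?v 0) / sig2 mu ?v 0" .
    show ?case unfolding e Gf_def using s0 elim(4)
      by (simp add: psi_def xi field_simps)
  qed
  have c1a: "AE \<omega> in M. real_cond_exp M S (\<lambda>\<omega>. Gf (V \<omega>) + - h \<omega>) \<omega> = Gf (V \<omega>) + real_cond_exp M S (\<lambda>\<omega>. - h \<omega>) \<omega>"
    by (rule cexp_add_meas[OF P S.sigma_finite_subalgebra_axioms]) (auto simp: inth)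
  have c1b: "AE \<omega> in M. real_cond_exp M S (\<lambda>\<omega>. -1 * h \<omega>) \<omega> = -1 * real_cond_exp M S h \<omega>"
    by (rule S.real_cond_exp_cmult[OF inth])
  have c1: "AE \<omega> in M. beta (V \<omega>) 0 = real_cond_exp M S (\<lambda>\<omega>. Gf (V \<omega>) - h \<omega>) \<omega>"
    using c1a c1b KF by eventually_elim simp
  have concl1: "AE \<omega> in M. beta (V \<omega>) 0 =
            cexp M MV V (\<lambda>\<omega>.
               (wald gY gX (V \<omega>) * sig2 mu (V \<omega>) 1 - xi (V \<omega>)) / sig2 mu (V \<omega>) 0
               - (2 * R \<omega> - 1) * (X \<omega> - mu (V \<omega>) (R \<omega>)) * Y \<omega> /
                   (fRV om (R \<omega>) (V \<omega>) * sig2 mu (V \<omega>) 0)) \<omega>"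
    using c1 unfolding cexp_def S_def Gf_def h_def .
  define q where "q = measure M {\<omega>\<in>space M. R \<omega> = 0}"
  define J where "J = (\<lambda>\<omega>. (1 - R \<omega>) * Gf (V \<omega>) - (R \<omega> / fRV om (R \<omega>) (V \<omega>) - 1) * ((X \<omega> - mu (V \<omega>) (R \<omega>)) * Y \<omega>) / sig2 mu (V \<omega>) 0)"
  have IJ: "(1 - R \<omega>) * (wald gY gX (V \<omega>) * sig2 mu (V \<omega>) 1 - xi (V \<omega>)) /
                    (q * sig2 mu (V \<omega>) 0)
                 - (R \<omega> / fRV om (R \<omega>) (V \<omega>) - 1) * ((X \<omega> - mu (V \<omega>) (R \<omega>)) * Y \<omega>) /
                    (q * sig2 mu (V \<omega>) 0) = J \<omega> / q" for \<omega>
    unfolding J_def Gf_def by (rule divq)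
  have intEh: "integrable M (real_cond_exp M S h)" by (rule S.real_cond_exp_int(1)[OF inth])
  have i1: "integrable M (\<lambda>\<omega>. real_cond_exp M S h \<omega> * (1 - R \<omega>))"
    by (rule ib[OF intEh]) (use R01 in \<open>auto intro!: AE_I2\<close>)
  have i2: "integrable M (\<lambda>\<omega>. (1 - om (V \<omega>)) * h \<omega>)"
  proof (rule ib[OF inth])
    show "AE \<omega> in M. \<bar>(1 - om (V \<omega>)) * h \<omega>\<bar> \<le> \<bar>h \<omega>\<bar>"
      using overlap
    proof eventually_elim
      case (elim \<omega>)
      then have "\<bar>1 - om (V \<omega>)\<bar> \<le> 1" by auto
      then show ?case by (simp add: abs_mult mult_left_le_one_le)
    qed
  qed measurable
  have e1: "(\<integral>\<omega>. real_cond_exp M S h \<omega> * (1 - R \<omega>) \<partial>M) = (\<integral>\<omega>. real_cond_exp M S h \<omega> * (1 - om (V \<omega>)) \<partial>M)"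
  proof -
    have "(\<integral>\<omega>. real_cond_exp M S h \<omega> * (1 - R \<omega>) \<partial>M) = (\<integral>\<omega>. real_cond_exp M S h \<omega> * real_cond_exp M S (\<lambda>\<omega>. 1 - R \<omega>) \<omega> \<partial>M)"
      by (rule S.real_cond_exp_intg(2)[symmetric]) (auto simp: i1)
    also have "\<dots> = (\<integral>\<omega>. real_cond_exp M S h \<omega> * (1 - om (V \<omega>)) \<partial>M)"
      by (rule integral_cong_AE) (use ERS in \<open>auto elim!: eventually_mono\<close>)
    finally show ?thesis .
  qed
  have e2: "(\<integral>\<omega>. (1 - om (V \<omega>)) * h \<omega> \<partial>M) = (\<integral>\<omega>. (1 - om (V \<omega>)) * real_cond_exp M S h \<omega> \<partial>M)"
    by (rule S.real_cond_exp_intg(2)[symmetric]) (auto simp: i2)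
  have Jae: "AE \<omega> in M. J \<omega> = (1 - R \<omega>) * beta (V \<omega>) 0 + (real_cond_exp M S h \<omega> * (1 - R \<omega>) - (1 - om (V \<omega>)) * h \<omega>)"
    using KF overlap sig0pos AE_space
  proof eventually_elim
    case (elim \<omega>)
    have r: "R \<omega> = 0 \<or> R \<omega> = 1" using R01 elim by auto
    have "(R \<omega> / fRV om (R \<omega>) (V \<omega>) - 1) * ((X \<omega> - mu (V \<omega>) (R \<omega>)) * Y \<omega>) / sig2 mu (V \<omega>) 0
        = (1 - om (V \<omega>)) * h \<omega>"
      using r elim by (auto simp: h_def fRV_def field_simps)
    then show ?case unfolding J_def using elim by (simp add: algebra_simps)
  qed
  have "(\<integral>\<omega>. J \<omega> \<partial>M) = (\<integral>\<omega>. (1 - R \<omega>) * beta (V \<omega>) 0 + (real_cond_exp M S h \<omega> * (1 - R \<omega>) - (1 - om (V \<omega>)) * h \<omega>) \<partial>M)"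
    by (rule integral_cong_AE) (use Jae in \<open>auto simp: J_def\<close>)
  also have "\<dots> = (\<integral>\<omega>. (1 - R \<omega>) * beta (V \<omega>) 0 \<partial>M)"
    using T_int i1 i2 e1 e2 by (simp add: mult.commute)
  finally have intJ: "(\<integral>\<omega>. J \<omega> \<partial>M) = (\<integral>\<omega>. (1 - R \<omega>) * beta (V \<omega>) 0 \<partial>M)" .
  have concl2: "(\<integral>\<omega>. (1 - R \<omega>) * (Y1 \<omega> - Y0 \<omega>) \<partial>M) / q =
           (\<integral>\<omega>. (1 - R \<omega>) * (wald gY gX (V \<omega>) * sig2 mu (V \<omega>) 1 - xi (V \<omega>)) /
                    (q * sig2 mu (V \<omega>) 0)
                 - (R \<omega> / fRV om (R \<omega>) (V \<omega>) - 1) * ((X \<omega> - mu (V \<omega>) (R \<omega>)) * Y \<omega>) /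
                    (q * sig2 mu (V \<omega>) 0) \<partial>M)"
    unfolding IJ integral_divide_zero intJ T_eq ..
  show ?thesis using concl1 concl2 unfolding q_def Let_def by blast
qed

end
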